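(* Let $F$ be a field of characteristic $2$, let $\phi$ be an anisotropic quasilinear quadratic form over $F$, let $K$ be a purely transcendental field extension of $F$, and let $r$ be a positive integer. If $\phi_K$ is divisible by an $r$-fold quasi-Pfister form over $K$, then $\phi$ is divisible by an $r$-fold quasi-Pfister form over $F$.
   Context: A quasilinear quadratic form over a field of characteristic 2 is a quadratic form $\phi$ on a finite-dimensional space with $\phi(v+w)=\phi(v)+\phi(w)$. The $r$-fold quasi-Pfister form $\langle\langle a_1,\dots,a_r\rangle\rangle$ is $\sum_{S\subseteq\{1,\dots,r\}}(\prod_{j\in S}a_j)x_S^2$. $\phi$ is divisible by $\pi$ if $\phi\simeq\pi\otimes\sigma$ for some quasilinear quadratic form $\sigma$. *)

theory Defs
  imports Main
begin

text \<open>Quasilinear quadratic forms over a field of characteristic 2 are diagonal: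
  phi = <a_0,...,a_(n-1)>, i.e. phi(x) = sum_i a_i x_i^2 on F^n.
  We represent such a form by its list of diagonal coefficients.
  Vectors of F^n are functions nat => 'a (only indices < n matter).\<close>

definition qf_eval :: "'a::comm_ring_1 list \<Rightarrow> (nat \<Rightarrow> 'a) \<Rightarrow> 'a" where
  "qf_eval \<phi> x = (\<Sum>i<length \<phi>. \<phi> ! i * (x i)^2)"

definition anisotropic :: "'a::comm_ring_1 list \<Rightarrow> bool" where
  "anisotropic \<phi> \<longleftrightarrow> (\<forall>x. qf_eval \<phi> x = 0 \<longrightarrow> (\<forall>i<length \<phi>. x i = 0))"

definition isometric :: "'a::comm_ring_1 list \<Rightarrow> 'a list \<Rightarrow> bool" where
  "isometric \<phi> \<psi> \<longleftrightarrow> length \<phi> = length \<psi> \<and>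
     (\<exists>M N :: nat \<Rightarrow> nat \<Rightarrow> 'a.
        (\<forall>i<length \<phi>. \<forall>j<length \<phi>.
            (\<Sum>k<length \<phi>. M i k * N k j) = (if i = j then 1 else 0)) \<and>
        (\<forall>i<length \<phi>. \<forall>j<length \<phi>.
            (\<Sum>k<length \<phi>. N i k * M k j) = (if i = j then 1 else 0)) \<and>
        (\<forall>x. qf_eval \<phi> (\<lambda>i. \<Sum>j<length \<phi>. M i j * x j) = qf_eval \<psi> x))"

definition qf_tensor :: "'a::comm_ring_1 list \<Rightarrow> 'a list \<Rightarrow> 'a list" where
  "qf_tensor \<pi> \<sigma> = concat (map (\<lambda>a. map (\<lambda>b. a * b) \<sigma>) \<pi>)"

definition divisible_by :: "'a::comm_ring_1 list \<Rightarrow> 'a list \<Rightarrow> bool" where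
  "divisible_by \<phi> \<pi> \<longleftrightarrow> (\<exists>\<sigma>. isometric \<phi> (qf_tensor \<pi> \<sigma>))"

text \<open>Quasi-Pfister form <<a_1,...,a_r>>: coefficients prod_{j in S} a_j, S subset {1..r}.\<close>
fun quasi_pfister :: "'a::comm_ring_1 list \<Rightarrow> 'a list" where
  "quasi_pfister [] = [1]"
| "quasi_pfister (a # as) = quasi_pfister as @ map (\<lambda>c. a * c) (quasi_pfister as)"

text \<open>A field extension K/F is given by a ring
  homomorphism sigma : F -> K.
  A polynomial over F in variables from S is a finitely supported map p from monomials
  (finitely supported exponent maps m : K => nat with support in S) to F.\<close>

definition field_hom :: "('a::field \<Rightarrow> 'b::field) \<Rightarrow> bool" where
  "field_hom \<sigma> \<longleftrightarrow> \<sigma> 0 = 0 \<and> \<sigma> 1 = 1 \<and>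
     (\<forall>x y. \<sigma> (x + y) = \<sigma> x + \<sigma> y) \<and> (\<forall>x y. \<sigma> (x * y) = \<sigma> x * \<sigma> y)"

definition is_poly_over :: "'b set \<Rightarrow> (('b \<Rightarrow> nat) \<Rightarrow> 'a::zero) \<Rightarrow> bool" where
  "is_poly_over S p \<longleftrightarrow> finite {m. p m \<noteq> 0} \<and>
     (\<forall>m. p m \<noteq> 0 \<longrightarrow> finite {s. m s \<noteq> 0} \<and> {s. m s \<noteq> 0} \<subseteq> S)"

definition poly_eval :: "('a \<Rightarrow> 'b::field) \<Rightarrow> (('b \<Rightarrow> nat) \<Rightarrow> 'a::zero) \<Rightarrow> 'b" where
  "poly_eval \<sigma> p = (\<Sum>m\<in>{m. p m \<noteq> 0}. \<sigma> (p m) * (\<Prod>s\<in>{s. m s \<noteq> 0}. s ^ m s))"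

definition alg_indep :: "('a::field \<Rightarrow> 'b::field) \<Rightarrow> 'b set \<Rightarrow> bool" where
  "alg_indep \<sigma> S \<longleftrightarrow>
     (\<forall>p :: ('b \<Rightarrow> nat) \<Rightarrow> 'a. is_poly_over S p \<and> poly_eval \<sigma> p = 0 \<longrightarrow> (\<forall>m. p m = 0))"

definition subfield :: "'b::field set \<Rightarrow> bool" where
  "subfield L \<longleftrightarrow> 0 \<in> L \<and> 1 \<in> L \<and>
     (\<forall>x\<in>L. \<forall>y\<in>L. x + y \<in> L \<and> x * y \<in> L) \<and>
     (\<forall>x\<in>L. - x \<in> L \<and> inverse x \<in> L)"

definition generates_field :: "('a::field \<Rightarrow> 'b::field) \<Rightarrow> 'b set \<Rightarrow> bool" where
  "generates_field \<sigma> S \<longleftrightarrow>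
     (\<forall>L. subfield L \<and> range \<sigma> \<subseteq> L \<and> S \<subseteq> L \<longrightarrow> L = UNIV)"

definition purely_transcendental :: "('a::field \<Rightarrow> 'b::field) \<Rightarrow> bool" where
  "purely_transcendental \<sigma> \<longleftrightarrow> field_hom \<sigma> \<and>
     (\<exists>S. alg_indep \<sigma> S \<and> generates_field \<sigma> S)"

end

theory Submission
  imports Defs "HOL.Vector_Spaces"
begin

definition fs :: "'a::field \<Rightarrow> 'a \<Rightarrow> 'a" where "fs c x = c^2 * x"

lemma sq_add2: assumes "(2::'a::comm_ring_1) = 0" shows "(x + y)^2 = x^2 + (y::'a)^2"
proof -
  have "2 * x * y = 0" using assms by simp
  then show ?thesis using power2_sum[of x y] by simp
qed

lemma minus_2: "(2::'a::comm_ring_1) = 0 \<Longrightarrow> - (x::'a) = x"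
proof -
  assume "(2::'a) = 0"
  then have "x + x = 0" by (metis mult_2 mult_zero_left)
  then show ?thesis by (simp add: add_eq_0_iff)
qed

lemma sq_sum2: assumes "(2::'a::comm_ring_1) = 0" shows "(sum f A)^2 = (\<Sum>x\<in>A. (f x::'a)^2)"
  by (induct A rule: infinite_finite_induct) (auto simp: sq_add2[OF assms])

lemma vs_fs: "(2::'a::field) = 0 \<Longrightarrow> vector_space (fs::'a\<Rightarrow>'a\<Rightarrow>'a)"
  unfolding vector_space_def fs_def by (simp add: distrib_left distrib_right power_mult_distrib sq_add2 mult.assoc)

lemma sq_eq_1: assumes "(2::'a::field) = 0" "x^2 = (1::'a)" shows "x = 1"
proof -
  have "(x - 1)^2 = x^2 + 1" using sq_add2[OF assms(1), of x "-1"] by simp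
  also have "\<dots> = 0" using assms by (metis one_add_one)
  finally show ?thesis by simp
qed

definition li :: "'a::field list \<Rightarrow> bool" where
  "li xs \<longleftrightarrow> (\<forall>c. (\<Sum>i<length xs. (c i)^2 * xs!i) = 0 \<longrightarrow> (\<forall>i<length xs. c i = 0))"

lemma aniso_li: "anisotropic \<phi> \<longleftrightarrow> li \<phi>"
  unfolding anisotropic_def li_def qf_eval_def by (simp add: mult.commute)

lemma sum_nth_set: "distinct xs \<Longrightarrow> (\<Sum>i<length xs. g (xs!i)) = (\<Sum>x\<in>set xs. g x)"
proof -
  assume d: "distinct xs"
  have "inj_on ((!) xs) {..<length xs}" using d by (simp add: inj_on_def nth_eq_iff_index_eq)
  moreover have "set xs = (!) xs ` {..<length xs}" by (auto simp: in_set_conv_nth)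
  ultimately show ?thesis by (simp add: sum.reindex)
qed

lemma li_iff: assumes two: "(2::'a::field) = 0"
  shows "li (xs::'a list) \<longleftrightarrow> distinct xs \<and> \<not> module.dependent fs (set xs)"
proof -
  interpret V: vector_space "fs::'a\<Rightarrow>'a\<Rightarrow>'a" using vs_fs[OF two] .
  show ?thesis
  proof
    assume L: "li xs"
    have d: "distinct xs"
    proof (rule ccontr)
      assume "\<not> distinct xs"
      then obtain i j where ij: "i < length xs" "j < length xs" "i \<noteq> j" "xs!i = xs!j"
        by (auto simp: distinct_conv_nth)
      let ?c = "\<lambda>k. if k = i \<or> k = j then (1::'a) else 0"
      have "(\<Sum>k<length xs. (?c k)^2 * xs!k) = (\<Sum>k\<in>{i,j}. xs!k)"
        by (rule sum.mono_neutral_cong_right) (use ij in auto)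
      also have "\<dots> = 2 * xs!i" using ij by simp
      finally have sz: "(\<Sum>k<length xs. (?c k)^2 * xs!k) = 0" using two by simp
      have "?c i = 0" using L[unfolded li_def, rule_format, OF sz, of i] ij(1) by blast
      then show False by simp
    qed
    moreover have "V.independent (set xs)"
    proof (rule V.independent_if_scalars_zero)
      fix f x assume s: "(\<Sum>x\<in>set xs. fs (f x) x) = 0" and x: "x \<in> set xs"
      have "(\<Sum>i<length xs. (f (xs!i))^2 * xs!i) = 0"
        using s sum_nth_set[OF d, of "\<lambda>x. fs (f x) x"] by (simp add: fs_def)
      then have "\<forall>i<length xs. f (xs!i) = 0" using L[unfolded li_def, rule_format, of "\<lambda>i. f (xs!i)"] by blast
      with x show "f x = 0" by (auto simp: in_set_conv_nth)
    qed simp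
    ultimately show "distinct xs \<and> V.independent (set xs)" by blast
  next
    assume R: "distinct xs \<and> V.independent (set xs)"
    show "li xs" unfolding li_def
    proof (rule allI, rule impI)
      fix c assume s: "(\<Sum>i<length xs. (c i)^2 * xs!i) = 0"
      define u where "u x = c (inv_into {..<length xs} ((!) xs) x)" for x
      have inj: "inj_on ((!) xs) {..<length xs}" using R by (simp add: inj_on_def nth_eq_iff_index_eq)
      have u: "u (xs!i) = c i" if "i < length xs" for i using inj that by (simp add: u_def)
      have "(\<Sum>x\<in>set xs. fs (u x) x) = (\<Sum>i<length xs. fs (u (xs!i)) (xs!i))"
        using sum_nth_set[of xs "\<lambda>x. fs (u x) x"] R by simp
      also have "\<dots> = 0" using s u by (simp add: fs_def)
      finally have z: "(\<Sum>x\<in>set xs. fs (u x) x) = 0" .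
      show "\<forall>i<length xs. c i = 0"
        using V.independentD[OF conjunct2[OF R] _ _ z] u by (metis finite_set order_refl nth_mem)
    qed
  qed
qed

lemma sq_diff2: assumes "(2::'a::comm_ring_1) = 0" shows "(x - y)^2 = x^2 - (y::'a)^2"
proof -
  have "x - y = x + y" using minus_2[OF assms, of y] by (metis diff_conv_add_uminus)
  then show ?thesis using sq_add2[OF assms, of x y] minus_2[OF assms, of "y^2"]
    by (metis diff_conv_add_uminus)
qed

lemma li_unique: assumes two: "(2::'a::field) = 0" and L: "li (xs::'a list)"
  and eq: "(\<Sum>k<length xs. (a k)^2 * xs!k) = (\<Sum>k<length xs. (b k)^2 * xs!k)"
  and k: "k < length xs"
  shows "a k = b k"
proof -
  have "(\<Sum>k<length xs. (a k - b k)^2 * xs!k) = (\<Sum>k<length xs. (a k)^2 * xs!k - (b k)^2 * xs!k)"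
    by (rule sum.cong) (auto simp: sq_diff2[OF two] algebra_simps)
  also have "\<dots> = 0" using eq by (simp add: sum_subtractf)
  finally have "a k - b k = 0" using L[unfolded li_def, rule_format, of "\<lambda>k. a k - b k"] k by blast
  then show ?thesis by simp
qed

lemma span_list: assumes two: "(2::'a::field) = 0" and d: "distinct (xs::'a list)"
  shows "module.span fs (set xs) = {(\<Sum>k<length xs. (c k)^2 * xs!k) | c. True}"
proof -
  interpret V: vector_space "fs::'a\<Rightarrow>'a\<Rightarrow>'a" using vs_fs[OF two] .
  have inj: "inj_on ((!) xs) {..<length xs}" using d by (simp add: inj_on_def nth_eq_iff_index_eq)
  show ?thesis
  proof safe
    fix x assume "x \<in> V.span (set xs)"
    then obtain u where u: "x = (\<Sum>v\<in>set xs. fs (u v) v)" using V.span_finite[of "set xs"] by auto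
    then have "x = (\<Sum>k<length xs. (u (xs!k))^2 * xs!k)" using sum_nth_set[OF d, of "\<lambda>v. fs (u v) v"]
      by (simp add: fs_def)
    then show "\<exists>c. x = (\<Sum>k<length xs. (c k)^2 * xs!k) \<and> True" by (intro exI[of _ "\<lambda>k. u (xs!k)"]) simp
  next
    fix c
    show "(\<Sum>k<length xs. (c k)^2 * xs!k) \<in> V.span (set xs)"
      by (rule V.span_sum) (metis V.span_base V.span_scale fs_def lessThan_iff nth_mem)
  qed
qed

lemma li_span_card: assumes two: "(2::'a::field) = 0" and L1: "li (xs::'a list)"
  and sub: "set xs \<subseteq> module.span fs (set ys)"
  shows "length xs \<le> length ys"
proof -
  interpret V: vector_space "fs::'a\<Rightarrow>'a\<Rightarrow>'a" using vs_fs[OF two] .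
  have "card (set xs) \<le> card (set ys)"
    using V.independent_span_bound[OF finite_set _ sub] L1 li_iff[OF two] by blast
  moreover have "card (set xs) = length xs" using L1 li_iff[OF two] distinct_card by blast
  moreover have "card (set ys) \<le> length ys" by (rule card_length)
  ultimately show ?thesis by linarith
qed

lemma qf_eval_lin: assumes two: "(2::'a::comm_ring_1) = 0"
  shows "qf_eval (\<phi>::'a list) (\<lambda>i. \<Sum>j<m. M i j * x j) = (\<Sum>j<m. (\<Sum>i<length \<phi>. (M i j)^2 * \<phi>!i) * (x j)^2)"
proof -
  have "qf_eval \<phi> (\<lambda>i. \<Sum>j<m. M i j * x j) = (\<Sum>i<length \<phi>. \<phi>!i * (\<Sum>j<m. (M i j)^2 * (x j)^2))"
    unfolding qf_eval_def
    apply (rule sum.cong[OF refl])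
    apply (subst sq_sum2[OF two])
    apply (simp add: power_mult_distrib)
    done
  also have "\<dots> = (\<Sum>i<length \<phi>. \<Sum>j<m. (M i j)^2 * \<phi>!i * (x j)^2)"
    by (simp add: sum_distrib_left algebra_simps)
  also have "\<dots> = (\<Sum>j<m. \<Sum>i<length \<phi>. (M i j)^2 * \<phi>!i * (x j)^2)" by (rule sum.swap)
  also have "\<dots> = (\<Sum>j<m. (\<Sum>i<length \<phi>. (M i j)^2 * \<phi>!i) * (x j)^2)"
    by (simp add: sum_distrib_right)
  finally show ?thesis .
qed

lemma compose_id: assumes two: "(2::'a::field) = 0" and L: "li (ys::'a list)"
  and n: "length xs = length ys"
  and A: "\<And>j. j < length ys \<Longrightarrow> ys!j = (\<Sum>i<length xs. (M i j)^2 * xs!i)"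
  and B: "\<And>i. i < length xs \<Longrightarrow> xs!i = (\<Sum>k<length ys. (N k i)^2 * ys!k)"
  and k: "k < length ys" and j: "j < length ys"
  shows "(\<Sum>i<length ys. N k i * M i j) = (if k = j then 1 else 0)"
proof -
  let ?n = "length ys"
  have "(\<Sum>k<?n. (\<Sum>i<?n. N k i * M i j)^2 * ys!k) = (\<Sum>k<?n. \<Sum>i<?n. (M i j)^2 * ((N k i)^2 * ys!k))"
    apply (rule sum.cong[OF refl])
    apply (subst sq_sum2[OF two])
    apply (simp add: power_mult_distrib sum_distrib_left mult_ac)
    done
  also have "\<dots> = (\<Sum>i<?n. (M i j)^2 * (\<Sum>k<?n. (N k i)^2 * ys!k))"
    by (subst sum.swap) (simp add: sum_distrib_left)
  also have "\<dots> = (\<Sum>i<?n. (M i j)^2 * xs!i)" using B n by simp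
  also have "\<dots> = ys!j" using A j n by simp
  also have "\<dots> = (\<Sum>k<?n. (if k = j then 1 else 0)^2 * ys!k)"
    using j by (simp add: if_distrib[of "\<lambda>x. x^2 * _"] cong: if_cong)
  finally have "(\<Sum>i<?n. N k i * M i j) = (if k = j then 1 else 0)"
    by (rule li_unique[OF two L _ k])
  then show ?thesis .
qed

lemma isometric_bases: assumes two: "(2::'a::field) = 0" and L1: "li (xs::'a list)" and L2: "li ys"
  and S1: "set ys \<subseteq> module.span fs (set xs)" and S2: "set xs \<subseteq> module.span fs (set ys)"
  shows "isometric xs ys"
proof -
  have n: "length xs = length ys" using li_span_card[OF two L1 S2] li_span_card[OF two L2 S1] by simp
  have d1: "distinct xs" and d2: "distinct ys" using L1 L2 li_iff[OF two] by auto
  have "\<forall>j. \<exists>c. j < length ys \<longrightarrow> ys!j = (\<Sum>i<length xs. (c i)^2 * xs!i)"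
  proof
    fix j show "\<exists>c. j < length ys \<longrightarrow> ys!j = (\<Sum>i<length xs. (c i)^2 * xs!i)"
    proof (cases "j < length ys")
      case True
      then have "ys!j \<in> module.span fs (set xs)" using S1 nth_mem by blast
      then show ?thesis unfolding span_list[OF two d1] by blast
    qed simp
  qed
  then obtain Mc where Mc: "\<And>j. j < length ys \<Longrightarrow> ys!j = (\<Sum>i<length xs. (Mc j i)^2 * xs!i)"
    by metis
  have "\<forall>i. \<exists>c. i < length xs \<longrightarrow> xs!i = (\<Sum>k<length ys. (c k)^2 * ys!k)"
  proof
    fix j show "\<exists>c. j < length xs \<longrightarrow> xs!j = (\<Sum>i<length ys. (c i)^2 * ys!i)"
    proof (cases "j < length xs")
      case True
      then have "xs!j \<in> module.span fs (set ys)" using S2 nth_mem by blast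
      then show ?thesis unfolding span_list[OF two d2] by blast
    qed simp
  qed
  then obtain Nc where Nc: "\<And>i. i < length xs \<Longrightarrow> xs!i = (\<Sum>k<length ys. (Nc i k)^2 * ys!k)"
    by metis
  define M where "M i j = Mc j i" for i j
  define N where "N k i = Nc i k" for k i
  have A: "\<And>j. j < length ys \<Longrightarrow> ys!j = (\<Sum>i<length xs. (M i j)^2 * xs!i)" using Mc M_def by simp
  have B: "\<And>i. i < length xs \<Longrightarrow> xs!i = (\<Sum>k<length ys. (N k i)^2 * ys!k)" using Nc N_def by simp
  have NM: "(\<Sum>i<length xs. N k i * M i j) = (if k = j then 1 else 0)"
    if "k < length xs" "j < length xs" for k j
    using compose_id[OF two L2 n A B] that n by simp
  have MN: "(\<Sum>k<length xs. M i k * N k j) = (if i = j then 1 else 0)"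
    if "i < length xs" "j < length xs" for i j
    using compose_id[OF two L1 n[symmetric] B A] that n by simp
  have Q: "qf_eval xs (\<lambda>i. \<Sum>j<length xs. M i j * x j) = qf_eval ys x" for x
  proof -
    have "qf_eval xs (\<lambda>i. \<Sum>j<length xs. M i j * x j) = (\<Sum>j<length xs. (\<Sum>i<length xs. (M i j)^2 * xs!i) * (x j)^2)"
      by (rule qf_eval_lin[OF two])
    also have "\<dots> = (\<Sum>j<length ys. ys!j * (x j)^2)" using A n by simp
    finally show ?thesis by (simp add: qf_eval_def)
  qed
  show ?thesis unfolding isometric_def using n MN NM Q by blast
qed

lemma span_mult_closed: assumes two: "(2::'a::field) = 0"
  and h: "\<And>a. a \<in> A \<Longrightarrow> p * a \<in> module.span fs B" and u: "u \<in> module.span fs A"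
  shows "p * (u::'a) \<in> module.span fs B"
proof -
  interpret V: vector_space "fs::'a\<Rightarrow>'a\<Rightarrow>'a" using vs_fs[OF two] .
  from u show ?thesis
  proof (induct rule: V.span_induct_alt)
    case base then show ?case by (simp add: V.span_zero)
  next
    case (step c x y)
    have "p * fs c x + p * y = fs c (p * x) + p * y" by (simp add: fs_def mult_ac)
    moreover have "fs c (p * x) \<in> V.span B" using h[OF step(1)] by (rule V.span_scale)
    ultimately show ?case using V.span_add step(2) by (simp add: distrib_left)
  qed
qed

lemma span_mult_image: assumes two: "(2::'a::field) = 0" and u: "u \<in> module.span fs A"
  shows "u * (t::'a) \<in> module.span fs ((\<lambda>a. a * t) ` A)"
proof -
  interpret V: vector_space "fs::'a\<Rightarrow>'a\<Rightarrow>'a" using vs_fs[OF two] .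
  have "t * u \<in> V.span ((\<lambda>a. a * t) ` A)"
    by (rule span_mult_closed[OF two _ u]) (auto simp: mult.commute intro!: V.span_base)
  then show ?thesis by (simp add: mult.commute)
qed

lemma extend_indep: assumes two: "(2::'a::field) = 0"
  and fA: "finite A" and iA: "\<not> module.dependent fs A"
  and fP: "finite P" and iP: "\<not> module.dependent fs P"
  and v: "v \<notin> module.span fs A"
  and cl: "\<And>p u. p \<in> P \<Longrightarrow> u \<in> module.span fs A \<Longrightarrow> p * u \<in> module.span fs A"
  shows "\<not> module.dependent fs (A \<union> (\<lambda>p. p * (v::'a)) ` P) \<and> A \<inter> (\<lambda>p. p * v) ` P = {}
     \<and> inj_on (\<lambda>p. p * v) P"
proof -
  interpret V: vector_space "fs::'a\<Rightarrow>'a\<Rightarrow>'a" using vs_fs[OF two] .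
  let ?B = "(\<lambda>p. p * v) ` P"
  have v0: "v \<noteq> 0" using v V.span_zero by auto
  have key: "e = 0" if e: "e \<in> V.span P" and ev: "e * v \<in> V.span A" for e
  proof (rule ccontr)
    assume ne: "e \<noteq> 0"
    have "(e * v) * e \<in> V.span A"
      by (rule span_mult_closed[OF two _ e]) (use cl ev in \<open>auto simp: mult.commute\<close>)
    then have "e * (e * v) \<in> V.span A" by (simp add: mult_ac)
    then have "fs (inverse e) (e * (e * v)) \<in> V.span A" by (rule V.span_scale)
    moreover have "fs (inverse e) (e * (e * v)) = v" using ne
      by (simp add: fs_def power2_eq_square field_simps)
    ultimately show False using v by simp
  qed
  have inj: "inj_on (\<lambda>p. p * v) P" using v0 by (auto simp: inj_on_def)
  have disj: "A \<inter> ?B = {}"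
  proof (rule ccontr)
    assume "A \<inter> ?B \<noteq> {}"
    then obtain p where p: "p \<in> P" "p * v \<in> A" by auto
    then have "p = 0" using key[of p] V.span_base by blast
    then show False using iP p(1) V.dependent_zero by blast
  qed
  have "V.independent (A \<union> ?B)"
  proof (rule V.independent_if_scalars_zero)
    show "finite (A \<union> ?B)" using fA fP by simp
  next
    fix f x assume s: "(\<Sum>x\<in>A \<union> ?B. fs (f x) x) = 0" and x: "x \<in> A \<union> ?B"
    let ?e = "\<Sum>p\<in>P. fs (f (p * v)) p"
    have "(\<Sum>x\<in>?B. fs (f x) x) = (\<Sum>p\<in>P. fs (f (p * v)) (p * v))"
      by (simp add: sum.reindex[OF inj])
    also have "\<dots> = (\<Sum>p\<in>P. fs (f (p * v)) p * v)"
      by (rule sum.cong[OF refl]) (simp add: fs_def mult.assoc)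
    also have "\<dots> = ?e * v" by (simp add: sum_distrib_right)
    finally have sB: "(\<Sum>x\<in>?B. fs (f x) x) = ?e * v" .
    have "(\<Sum>x\<in>A. fs (f x) x) + ?e * v = 0"
      using s sB by (simp add: sum.union_disjoint[OF fA _ disj] fP)
    then have "?e * v + (\<Sum>x\<in>A. fs (f x) x) = 0" by (simp only: add.commute)
    then have "?e * v = - (\<Sum>x\<in>A. fs (f x) x)" by (rule eq_neg_iff_add_eq_0[THEN iffD2])
    then have "?e * v \<in> V.span A"
      by (simp add: V.span_neg V.span_sum V.span_scale V.span_base)
    moreover have "?e \<in> V.span P" by (simp add: V.span_sum V.span_scale V.span_base)
    ultimately have e0: "?e = 0" using key by blast
    have fB: "\<forall>p\<in>P. f (p * v) = 0"
      using V.independentD[OF iP fP order_refl e0] by blast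
    then have "(\<Sum>x\<in>?B. fs (f x) x) = 0" using sB e0 by simp
    then have sA: "(\<Sum>x\<in>A. fs (f x) x) = 0"
      using s by (simp add: sum.union_disjoint[OF fA _ disj] fP)
    show "f x = 0"
    proof (cases "x \<in> A")
      case True then show ?thesis using V.independentD[OF iA fA order_refl sA] by blast
    next
      case False then show ?thesis using x fB by auto
    qed
  qed
  then show ?thesis using disj inj by blast
qed

lemma qp_set: "set (quasi_pfister (a # as)) = set (quasi_pfister as) \<union> (\<lambda>c. c * a) ` set (quasi_pfister as)"
  by (auto simp: mult.commute)

lemma qp_length: "length (quasi_pfister as) = 2 ^ length as"
  by (induct as) auto

lemma qp_prod: assumes two: "(2::'a::field) = 0"
  shows "p \<in> set (quasi_pfister as) \<Longrightarrow> q \<in> set (quasi_pfister as) \<Longrightarrow> p * q \<in> module.span fs (set (quasi_pfister (as::'a list)))"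
proof (induct as arbitrary: p q)
  case Nil
  interpret V: vector_space "fs::'a\<Rightarrow>'a\<Rightarrow>'a" using vs_fs[OF two] .
  show ?case using Nil by (simp add: V.span_base)
next
  case (Cons a as)
  interpret V: vector_space "fs::'a\<Rightarrow>'a\<Rightarrow>'a" using vs_fs[OF two] .
  let ?Q = "set (quasi_pfister as)"
  have sub: "V.span ?Q \<subseteq> V.span (set (quasi_pfister (a # as)))" by (rule V.span_mono) (auto simp: qp_set)
  have sub2: "V.span ((\<lambda>c. c * a) ` ?Q) \<subseteq> V.span (set (quasi_pfister (a # as)))"
    by (rule V.span_mono) (auto simp: qp_set)
  from Cons.prems consider (1) "p \<in> ?Q" "q \<in> ?Q"
    | (2) x where "p \<in> ?Q" "x \<in> ?Q" "q = x * a" | (3) y where "y \<in> ?Q" "p = y * a" "q \<in> ?Q"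
    | (4) x y where "x \<in> ?Q" "y \<in> ?Q" "p = x * a" "q = y * a"
    unfolding qp_set by blast
  then show ?case
  proof cases
    case 1 then show ?thesis using Cons.hyps sub by blast
  next
    case 2
    have "(p * x) * a \<in> V.span ((\<lambda>c. c * a) ` ?Q)" using span_mult_image[OF two Cons.hyps[OF 2(1,2)]] .
    then show ?thesis using 2 sub2 by (auto simp: mult_ac)
  next
    case 3
    have "(y * q) * a \<in> V.span ((\<lambda>c. c * a) ` ?Q)" using span_mult_image[OF two Cons.hyps[OF 3(1,3)]] .
    then show ?thesis using 3 sub2 by (auto simp: mult_ac)
  next
    case 4
    have "fs a (x * y) \<in> V.span ?Q" using Cons.hyps[OF 4(1,2)] by (rule V.span_scale)
    moreover have "p * q = fs a (x * y)" using 4 by (simp add: fs_def power2_eq_square mult_ac)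
    ultimately show ?thesis using sub by auto
  qed
qed

definition stab :: "'a::field list \<Rightarrow> 'a set" where
  "stab \<phi> = {e. \<forall>x\<in>set \<phi>. e * x \<in> module.span fs (set \<phi>)}"

lemma stab_span: assumes two: "(2::'a::field) = 0" and e: "e \<in> stab \<phi>"
  and u: "u \<in> module.span fs (set \<phi>)" shows "e * u \<in> module.span fs (set (\<phi>::'a list))"
  by (rule span_mult_closed[OF two _ u]) (use e in \<open>auto simp: stab_def\<close>)

lemma stab_mult: assumes two: "(2::'a::field) = 0" and e: "e \<in> stab \<phi>" and f: "f \<in> stab \<phi>"
  shows "e * f \<in> stab (\<phi>::'a list)"
  unfolding stab_def
proof (rule CollectI, rule ballI)
  fix x assume x: "x \<in> set \<phi>"
  have "f * x \<in> module.span fs (set \<phi>)" using f x by (auto simp: stab_def)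
  then have "e * (f * x) \<in> module.span fs (set \<phi>)" by (rule stab_span[OF two e])
  then show "e * f * x \<in> module.span fs (set \<phi>)" by (simp add: mult.assoc)
qed

lemma stab_one: assumes two: "(2::'a::field) = 0" shows "1 \<in> stab (\<phi>::'a list)"
proof -
  interpret V: vector_space "fs::'a\<Rightarrow>'a\<Rightarrow>'a" using vs_fs[OF two] .
  show ?thesis by (auto simp: stab_def intro: V.span_base)
qed

lemma qp_stab: assumes two: "(2::'a::field) = 0"
  shows "set as \<subseteq> stab \<phi> \<Longrightarrow> set (quasi_pfister as) \<subseteq> stab (\<phi>::'a list)"
  by (induct as) (auto simp: stab_one[OF two] stab_mult[OF two])

lemma li_one: assumes two: "(2::'a::field) = 0" shows "li [1::'a]"
proof -
  interpret V: vector_space "fs::'a\<Rightarrow>'a\<Rightarrow>'a" using vs_fs[OF two] .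
  show ?thesis using li_iff[OF two] by simp
qed

lemma greedy_alpha: assumes two: "(2::'a::field) = 0"
  and CE: "C \<subseteq> stab \<phi>" and fC: "finite C" and iC: "\<not> module.dependent fs C"
  and cC: "2 ^ r \<le> card C"
  shows "k \<le> r \<Longrightarrow> \<exists>\<alpha>. length \<alpha> = k \<and> set \<alpha> \<subseteq> stab (\<phi>::'a list) \<and> li (quasi_pfister \<alpha>)"
proof (induct k)
  case 0 then show ?case using li_one[OF two] by (intro exI[of _ "[]"]) simp
next
  case (Suc k)
  interpret V: vector_space "fs::'a\<Rightarrow>'a\<Rightarrow>'a" using vs_fs[OF two] .
  from Suc obtain \<alpha> where \<alpha>: "length \<alpha> = k" "set \<alpha> \<subseteq> stab \<phi>" "li (quasi_pfister \<alpha>)" by auto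
  let ?Q = "set (quasi_pfister \<alpha>)"
  have dQ: "distinct (quasi_pfister \<alpha>)" and iQ: "V.independent ?Q" using \<alpha>(3) li_iff[OF two] by auto
  have cQ: "card ?Q = 2 ^ k" using dQ distinct_card qp_length \<alpha>(1) by metis
  have "\<not> C \<subseteq> V.span ?Q"
  proof
    assume "C \<subseteq> V.span ?Q"
    then have "card C \<le> card ?Q" using V.independent_span_bound[OF finite_set iC] by blast
    moreover have "2 ^ k < (2::nat) ^ r" using Suc.prems by simp
    ultimately show False using cC cQ by linarith
  qed
  then obtain \<beta> where \<beta>: "\<beta> \<in> C" "\<beta> \<notin> V.span ?Q" by blast
  have cl: "p * u \<in> V.span ?Q" if "p \<in> ?Q" "u \<in> V.span ?Q" for p u
    by (rule span_mult_closed[OF two _ that(2)]) (use qp_prod[OF two] that(1) in blast)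
  have X: "V.independent (?Q \<union> (\<lambda>p. p * \<beta>) ` ?Q) \<and> ?Q \<inter> (\<lambda>p. p * \<beta>) ` ?Q = {} \<and> inj_on (\<lambda>p. p * \<beta>) ?Q"
    by (rule extend_indep[OF two finite_set iQ finite_set iQ \<beta>(2) cl])
  have "distinct (quasi_pfister (\<beta> # \<alpha>))"
  proof -
    have "inj_on (\<lambda>c. \<beta> * c) ?Q" using X by (simp add: inj_on_def mult.commute)
    moreover have "(\<lambda>c. \<beta> * c) ` ?Q = (\<lambda>p. p * \<beta>) ` ?Q" by (auto simp: mult.commute)
    ultimately show ?thesis using X dQ by (simp add: distinct_map)
  qed
  moreover have "set (quasi_pfister (\<beta> # \<alpha>)) = ?Q \<union> (\<lambda>p. p * \<beta>) ` ?Q" by (rule qp_set)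
  ultimately have "li (quasi_pfister (\<beta> # \<alpha>))" using X li_iff[OF two] by simp
  then show ?case using \<alpha> \<beta>(1) CE by (intro exI[of _ "\<beta> # \<alpha>"]) auto
qed

lemma qft_set: "set (qf_tensor \<pi> \<tau>) = {p * t | p t. p \<in> set \<pi> \<and> t \<in> set \<tau>}"
  by (auto simp: qf_tensor_def)

lemma qft_length: "length (qf_tensor \<pi> \<tau>) = length \<pi> * length \<tau>"
  by (induct \<pi>) (auto simp: qf_tensor_def)

lemma qft_snoc: "set (qf_tensor \<pi> (\<tau> @ [v])) = set (qf_tensor \<pi> \<tau>) \<union> (\<lambda>p. p * v) ` set \<pi>"
  by (auto simp: qft_set)

lemma qft_nil: "qf_tensor \<pi> [] = []"
  by (induct \<pi>) (auto simp: qf_tensor_def)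

lemma greedy_tau: assumes two: "(2::'a::field) = 0"
  and L\<pi>: "li (\<pi>::'a list)" and S\<pi>: "set \<pi> \<subseteq> stab \<phi>"
  and pm: "\<And>p q. p \<in> set \<pi> \<Longrightarrow> q \<in> set \<pi> \<Longrightarrow> p * q \<in> module.span fs (set \<pi>)"
  shows "(\<exists>\<tau>. set \<tau> \<subseteq> set \<phi> \<and> li (qf_tensor \<pi> \<tau>) \<and> length \<tau> = k) \<or>
         (\<exists>\<tau>. set \<tau> \<subseteq> set \<phi> \<and> li (qf_tensor \<pi> \<tau>) \<and> set \<phi> \<subseteq> module.span fs (set (qf_tensor \<pi> \<tau>)))"
proof (induct k)
  case 0 then show ?case by (intro disjI1 exI[of _ "[]"]) (simp add: qft_nil li_def)
next
  case (Suc k)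
  interpret V: vector_space "fs::'a\<Rightarrow>'a\<Rightarrow>'a" using vs_fs[OF two] .
  show ?case
  proof (cases "\<exists>\<tau>. set \<tau> \<subseteq> set \<phi> \<and> li (qf_tensor \<pi> \<tau>) \<and> set \<phi> \<subseteq> module.span fs (set (qf_tensor \<pi> \<tau>))")
    case True then show ?thesis by blast
  next
    case False
    with Suc obtain \<tau> where \<tau>: "set \<tau> \<subseteq> set \<phi>" "li (qf_tensor \<pi> \<tau>)" "length \<tau> = k" by blast
    let ?A = "set (qf_tensor \<pi> \<tau>)"
    from False \<tau> obtain v where v: "v \<in> set \<phi>" "v \<notin> V.span ?A" by blast
    have dA: "distinct (qf_tensor \<pi> \<tau>)" and iA: "V.independent ?A" using \<tau>(2) li_iff[OF two] by auto
    have dP: "distinct \<pi>" and iP: "V.independent (set \<pi>)" using L\<pi> li_iff[OF two] by auto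
    have cl: "p * u \<in> V.span ?A" if "p \<in> set \<pi>" "u \<in> V.span ?A" for p u
    proof (rule span_mult_closed[OF two _ that(2)])
      fix a assume "a \<in> ?A"
      then obtain q t where qt: "a = q * t" "q \<in> set \<pi>" "t \<in> set \<tau>" by (auto simp: qft_set)
      have "(p * q) * t \<in> V.span ((\<lambda>c. c * t) ` set \<pi>)"
        by (rule span_mult_image[OF two pm[OF that(1) qt(2)]])
      moreover have "V.span ((\<lambda>c. c * t) ` set \<pi>) \<subseteq> V.span ?A"
        by (rule V.span_mono) (use qt(3) in \<open>auto simp: qft_set\<close>)
      ultimately show "p * a \<in> V.span ?A" using qt by (auto simp: mult.assoc)
    qed
    have X: "V.independent (?A \<union> (\<lambda>p. p * v) ` set \<pi>) \<and> ?A \<inter> (\<lambda>p. p * v) ` set \<pi> = {} \<and> inj_on (\<lambda>p. p * v) (set \<pi>)"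
      by (rule extend_indep[OF two finite_set iA finite_set iP v(2) cl])
    let ?\<tau> = "\<tau> @ [v]"
    have st: "set (qf_tensor \<pi> ?\<tau>) = ?A \<union> (\<lambda>p. p * v) ` set \<pi>" by (rule qft_snoc)
    have "card (set (qf_tensor \<pi> ?\<tau>)) = card ?A + card ((\<lambda>p. p * v) ` set \<pi>)"
      using st X by (simp add: card_Un_disjoint)
    also have "\<dots> = length \<pi> * length \<tau> + length \<pi>"
      using X dA dP by (simp add: distinct_card card_image qft_length)
    also have "\<dots> = length (qf_tensor \<pi> ?\<tau>)" by (simp add: qft_length)
    finally have "distinct (qf_tensor \<pi> ?\<tau>)" by (rule card_distinct)
    then have "li (qf_tensor \<pi> ?\<tau>)" using st X li_iff[OF two] by simp
    then show ?thesis using \<tau> v by (intro disjI1 exI[of _ ?\<tau>]) auto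
  qed
qed

lemma F_side: assumes two: "(2::'a::field) = 0" and L: "li (\<phi>::'a list)"
  and CE: "C \<subseteq> stab \<phi>" and fC: "finite C" and iC: "\<not> module.dependent fs C"
  and cC: "2 ^ r \<le> card C"
  shows "\<exists>as. length as = r \<and> divisible_by \<phi> (quasi_pfister as)"
proof -
  interpret V: vector_space "fs::'a\<Rightarrow>'a\<Rightarrow>'a" using vs_fs[OF two] .
  obtain \<alpha> where \<alpha>: "length \<alpha> = r" "set \<alpha> \<subseteq> stab \<phi>" "li (quasi_pfister \<alpha>)"
    using greedy_alpha[OF two CE fC iC cC order_refl] by blast
  let ?\<pi> = "quasi_pfister \<alpha>"
  have S\<pi>: "set ?\<pi> \<subseteq> stab \<phi>" by (rule qp_stab[OF two \<alpha>(2)])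
  have sub: "set (qf_tensor ?\<pi> \<tau>) \<subseteq> V.span (set \<phi>)" if "set \<tau> \<subseteq> set \<phi>" for \<tau>
    using that S\<pi> by (auto simp: qft_set stab_def)
  have pm: "\<And>p q. p \<in> set ?\<pi> \<Longrightarrow> q \<in> set ?\<pi> \<Longrightarrow> p * q \<in> V.span (set ?\<pi>)"
    by (rule qp_prod[OF two])
  have disj: "(\<exists>\<tau>. set \<tau> \<subseteq> set \<phi> \<and> li (qf_tensor ?\<pi> \<tau>) \<and> length \<tau> = length \<phi> + 1) \<or>
         (\<exists>\<tau>. set \<tau> \<subseteq> set \<phi> \<and> li (qf_tensor ?\<pi> \<tau>) \<and> set \<phi> \<subseteq> V.span (set (qf_tensor ?\<pi> \<tau>)))"
    by (rule greedy_tau[OF two \<alpha>(3) S\<pi>]) (rule pm)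
  from disj obtain \<tau> where \<tau>: "set \<tau> \<subseteq> set \<phi>" "li (qf_tensor ?\<pi> \<tau>)" "set \<phi> \<subseteq> V.span (set (qf_tensor ?\<pi> \<tau>))"
  proof (elim disjE exE conjE)
    fix \<tau> assume t: "set \<tau> \<subseteq> set \<phi>" "li (qf_tensor ?\<pi> \<tau>)" "length \<tau> = length \<phi> + 1"
    have "length (qf_tensor ?\<pi> \<tau>) \<le> length \<phi>" by (rule li_span_card[OF two t(2) sub[OF t(1)]])
    moreover have "length (qf_tensor ?\<pi> \<tau>) \<ge> length \<tau>"
      using qp_length[of \<alpha>] by (simp add: qft_length)
    ultimately show ?thesis using t(3) by simp
  qed blast
  have "isometric \<phi> (qf_tensor ?\<pi> \<tau>)" by (rule isometric_bases[OF two L \<tau>(2) sub[OF \<tau>(1)] \<tau>(3)])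
  then show ?thesis using \<alpha>(1) unfolding divisible_by_def by blast
qed

definition mon :: "('b::field \<Rightarrow> nat) \<Rightarrow> 'b" where
  "mon m = (\<Prod>s\<in>{s. m s \<noteq> 0}. s ^ m s)"

definition single :: "('b \<Rightarrow> nat) \<Rightarrow> 'a \<Rightarrow> ('b \<Rightarrow> nat) \<Rightarrow> 'a::zero" where
  "single \<mu> c = (\<lambda>x. if x = \<mu> then c else 0)"

lemma mon_sup: assumes "finite D" "{s. m s \<noteq> 0} \<subseteq> D"
  shows "mon m = (\<Prod>s\<in>D. s ^ m s)"
  unfolding mon_def by (rule prod.mono_neutral_left) (use assms in auto)

lemma mon_add: assumes "finite {s. m s \<noteq> 0}" "finite {s. m' s \<noteq> 0}"
  shows "mon (\<lambda>s. m s + m' s) = mon m * (mon m' :: 'b::field)"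
proof -
  let ?D = "{s. m s \<noteq> 0} \<union> {s. m' s \<noteq> 0}"
  have f: "finite ?D" using assms by simp
  have "mon (\<lambda>s. m s + m' s) = (\<Prod>s\<in>?D. s ^ (m s + m' s))" by (rule mon_sup[OF f]) auto
  also have "\<dots> = (\<Prod>s\<in>?D. s ^ m s) * (\<Prod>s\<in>?D. s ^ m' s)" by (simp add: power_add prod.distrib)
  also have "(\<Prod>s\<in>?D. s ^ m s) = mon m" by (rule mon_sup[OF f, symmetric]) auto
  also have "(\<Prod>s\<in>?D. s ^ m' s) = mon m'" by (rule mon_sup[OF f, symmetric]) auto
  finally show ?thesis .
qed

lemma mon_dbl: assumes "finite {s. m s \<noteq> 0}"
  shows "mon (\<lambda>s. 2 * m s) = (mon m :: 'b::field)^2"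
proof -
  have "mon (\<lambda>s. 2 * m s) = (\<Prod>s\<in>{s. m s \<noteq> 0}. s ^ (2 * m s))" by (rule mon_sup) (use assms in auto)
  also have "\<dots> = (\<Prod>s\<in>{s. m s \<noteq> 0}. (s ^ m s)^2)" by (simp add: power_mult mult.commute)
  also have "\<dots> = (mon m)^2" by (simp add: mon_def prod_power_distrib)
  finally show ?thesis .
qed

locale ptx =
  fixes \<sigma> :: "'a::field \<Rightarrow> 'b::field" and S :: "'b set"
  assumes hom: "field_hom \<sigma>" and ind: "alg_indep \<sigma> S" and gen: "generates_field \<sigma> S"
begin

lemma s0: "\<sigma> 0 = 0" and s1: "\<sigma> 1 = 1" and sadd: "\<sigma> (x + y) = \<sigma> x + \<sigma> y" and smult: "\<sigma> (x * y) = \<sigma> x * \<sigma> y"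
  using hom by (auto simp: field_hom_def)

lemma sneg: "\<sigma> (- x) = - \<sigma> x"
  using sadd[of x "-x"] s0 by (simp add: eq_neg_iff_add_eq_0 add.commute)

lemma sdiff: "\<sigma> (x - y) = \<sigma> x - \<sigma> y"
  using sadd[of "x - y" y] by simp

lemma ssum: "\<sigma> (sum f A) = (\<Sum>x\<in>A. \<sigma> (f x))"
  by (induct A rule: infinite_finite_induct) (auto simp: s0 sadd)

lemma spow: "\<sigma> (x ^ n) = \<sigma> x ^ n"
  by (induct n) (auto simp: s1 smult)

lemma sinj: "\<sigma> x = 0 \<longleftrightarrow> x = 0"
proof
  assume "\<sigma> x = 0"
  show "x = 0"
  proof (rule ccontr)
    assume "x \<noteq> 0"
    then have "\<sigma> x * \<sigma> (inverse x) = 1" by (simp add: smult[symmetric] s1)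
    with \<open>\<sigma> x = 0\<close> show False by simp
  qed
qed (simp add: s0)

lemma sinj2: "\<sigma> x = \<sigma> y \<longleftrightarrow> x = y"
  using sinj[of "x - y"] by (simp add: sdiff)

lemma two_b: "(2::'a) = 0 \<Longrightarrow> (2::'b) = 0"
  using sadd[of 1 1] s1 s0 by (metis one_add_one)

abbreviation isp :: "(('b \<Rightarrow> nat) \<Rightarrow> 'a) \<Rightarrow> bool" where "isp \<equiv> is_poly_over S"
abbreviation ev :: "(('b \<Rightarrow> nat) \<Rightarrow> 'a) \<Rightarrow> 'b" where "ev \<equiv> poly_eval \<sigma>"

lemma ev_sup: assumes "finite D" "{m. p m \<noteq> 0} \<subseteq> D"
  shows "ev p = (\<Sum>m\<in>D. \<sigma> (p m) * mon m)"
  unfolding poly_eval_def mon_def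
  by (rule sum.mono_neutral_left) (use assms in \<open>auto simp: s0\<close>)

lemma isp_add: assumes "isp p" "isp q" shows "isp (\<lambda>m. p m + q m)"
proof -
  have sub: "{m. p m + q m \<noteq> 0} \<subseteq> {m. p m \<noteq> 0} \<union> {m. q m \<noteq> 0}" by auto
  have "finite {m. p m + q m \<noteq> 0}" using assms finite_subset[OF sub] unfolding is_poly_over_def by blast
  moreover have "p m \<noteq> 0 \<or> q m \<noteq> 0" if "p m + q m \<noteq> 0" for m using that by auto
  ultimately show ?thesis using assms unfolding is_poly_over_def by blast
qed

lemma isp_scal: assumes "isp p" shows "isp (\<lambda>m. c * p m)"
proof -
  have sub: "{m. c * p m \<noteq> 0} \<subseteq> {m. p m \<noteq> 0}" by auto
  have "finite {m. c * p m \<noteq> 0}" using assms finite_subset[OF sub] unfolding is_poly_over_def by blast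
  moreover have "p m \<noteq> 0" if "c * p m \<noteq> 0" for m using that by auto
  ultimately show ?thesis using assms unfolding is_poly_over_def by blast
qed

lemma isp_zero: "isp (\<lambda>m. 0)" by (simp add: is_poly_over_def)

lemma isp_sum: "finite I \<Longrightarrow> (\<And>i. i \<in> I \<Longrightarrow> isp (p i)) \<Longrightarrow> isp (\<lambda>m. \<Sum>i\<in>I. p i m)"
  by (induct I rule: finite_induct) (auto simp: isp_zero isp_add)

lemma ev_add: assumes "isp p" "isp q" shows "ev (\<lambda>m. p m + q m) = ev p + ev q"
proof -
  let ?D = "{m. p m \<noteq> 0} \<union> {m. q m \<noteq> 0}"
  have f: "finite ?D" using assms by (auto simp: is_poly_over_def)
  have "ev (\<lambda>m. p m + q m) = (\<Sum>m\<in>?D. \<sigma> (p m + q m) * mon m)"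
    by (rule ev_sup[OF f]) auto
  also have "\<dots> = (\<Sum>m\<in>?D. \<sigma> (p m) * mon m) + (\<Sum>m\<in>?D. \<sigma> (q m) * mon m)"
    by (simp add: sadd distrib_right sum.distrib)
  also have "(\<Sum>m\<in>?D. \<sigma> (p m) * mon m) = ev p" by (rule ev_sup[symmetric, OF f]) auto
  also have "(\<Sum>m\<in>?D. \<sigma> (q m) * mon m) = ev q" by (rule ev_sup[symmetric, OF f]) auto
  finally show ?thesis .
qed

lemma ev_zero: "ev (\<lambda>m. 0) = 0" by (simp add: poly_eval_def)

lemma ev_scal: assumes "isp p" shows "ev (\<lambda>m. c * p m) = \<sigma> c * ev p"
proof -
  have f: "finite {m. p m \<noteq> 0}" using assms by (auto simp: is_poly_over_def)
  have "ev (\<lambda>m. c * p m) = (\<Sum>m\<in>{m. p m \<noteq> 0}. \<sigma> (c * p m) * mon m)"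
    by (rule ev_sup[OF f]) auto
  also have "\<dots> = \<sigma> c * (\<Sum>m\<in>{m. p m \<noteq> 0}. \<sigma> (p m) * mon m)"
    by (simp add: smult sum_distrib_left mult_ac)
  also have "\<dots> = \<sigma> c * ev p" using ev_sup[OF f, of p] by simp
  finally show ?thesis .
qed

lemma ev_sum: "finite I \<Longrightarrow> (\<And>i. i \<in> I \<Longrightarrow> isp (p i)) \<Longrightarrow> ev (\<lambda>m. \<Sum>i\<in>I. p i m) = (\<Sum>i\<in>I. ev (p i))"
proof (induct I rule: finite_induct)
  case empty then show ?case by (simp add: ev_zero)
next
  case (insert i I)
  have "ev (\<lambda>m. \<Sum>j\<in>insert i I. p j m) = ev (\<lambda>m. p i m + (\<Sum>j\<in>I. p j m))"
    using insert by simp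
  also have "\<dots> = ev (p i) + ev (\<lambda>m. \<Sum>j\<in>I. p j m)"
    by (rule ev_add) (use insert in \<open>auto intro: isp_sum\<close>)
  finally show ?case using insert by simp
qed

lemma ev_unique: assumes "isp p" "isp q" "ev p = ev q" shows "p = q"
proof -
  have i: "isp (\<lambda>m. p m + (-1) * q m)" by (rule isp_add[OF assms(1) isp_scal[OF assms(2)]])
  have "ev (\<lambda>m. p m + (-1) * q m) = ev p + ev (\<lambda>m. (-1) * q m)"
    by (rule ev_add[OF assms(1) isp_scal[OF assms(2)]])
  also have "\<dots> = ev p + \<sigma> (-1) * ev q" by (simp only: ev_scal[OF assms(2)])
  also have "\<dots> = 0" using assms(3) by (simp add: sneg s1)
  finally have "ev (\<lambda>m. p m + (-1) * q m) = 0" .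
  then have "\<forall>m. p m + (-1) * q m = 0" using ind i unfolding alg_indep_def by blast
  then show ?thesis by (auto simp: fun_eq_iff)
qed

lemma isp_single: "finite {s. \<mu> s \<noteq> 0} \<Longrightarrow> {s. \<mu> s \<noteq> 0} \<subseteq> S \<Longrightarrow> isp (single \<mu> c)"
  unfolding is_poly_over_def single_def by auto

lemma ev_single: "ev (single \<mu> c) = \<sigma> c * mon \<mu>"
proof -
  have "ev (single \<mu> c) = (\<Sum>m\<in>{\<mu>}. \<sigma> (single \<mu> c m) * mon m)"
    by (rule ev_sup) (auto simp: single_def)
  then show ?thesis by (simp add: single_def)
qed

definition Pol :: "'b set" where "Pol = {ev p | p. isp p}"

lemma PolI: "isp p \<Longrightarrow> ev p \<in> Pol" unfolding Pol_def by blast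

lemma Pol_add: assumes "x \<in> Pol" "y \<in> Pol" shows "x + y \<in> Pol"
proof -
  obtain p q where "isp p" "isp q" "x = ev p" "y = ev q" using assms unfolding Pol_def by blast
  then have "x + y = ev (\<lambda>m. p m + q m)" "isp (\<lambda>m. p m + q m)" by (auto simp: ev_add isp_add)
  then show ?thesis unfolding Pol_def by blast
qed

lemma Pol_zero: "0 \<in> Pol" unfolding Pol_def using ev_zero isp_zero by auto

lemma Pol_scal: assumes "x \<in> Pol" shows "\<sigma> c * x \<in> Pol"
proof -
  obtain p where "isp p" "x = ev p" using assms unfolding Pol_def by blast
  then have "\<sigma> c * x = ev (\<lambda>m. c * p m)" "isp (\<lambda>m. c * p m)" by (auto simp: ev_scal isp_scal)
  then show ?thesis unfolding Pol_def by blast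
qed

lemma Pol_sum: "finite I \<Longrightarrow> (\<And>i. i \<in> I \<Longrightarrow> f i \<in> Pol) \<Longrightarrow> sum f I \<in> Pol"
  by (induct I rule: finite_induct) (auto simp: Pol_zero Pol_add)

lemma Pol_const: "\<sigma> c \<in> Pol"
proof -
  have "ev (single (\<lambda>s. 0) c) = \<sigma> c" by (simp add: ev_single mon_def)
  moreover have "isp (single (\<lambda>s. 0) c)" by (rule isp_single) auto
  ultimately show ?thesis using PolI by metis
qed

lemma Pol_var: "s \<in> S \<Longrightarrow> s \<in> Pol"
proof -
  assume s: "s \<in> S"
  let ?\<mu> = "\<lambda>t. if t = s then 1::nat else 0"
  have "mon ?\<mu> = s" unfolding mon_def by (simp add: Collect_conv_if)
  then have "ev (single ?\<mu> 1) = s" by (simp add: ev_single s1)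
  moreover have "isp (single ?\<mu> 1)" by (rule isp_single) (use s in \<open>auto simp: Collect_conv_if\<close>)
  ultimately show ?thesis using PolI by metis
qed

lemma Pol_mult: assumes "x \<in> Pol" "y \<in> Pol" shows "x * y \<in> Pol"
proof -
  obtain p q where pq: "isp p" "isp q" "x = ev p" "y = ev q" using assms unfolding Pol_def by blast
  let ?A = "{m. p m \<noteq> 0}" and ?B = "{m. q m \<noteq> 0}"
  have fA: "finite ?A" and fB: "finite ?B" using pq by (auto simp: is_poly_over_def)
  have "x * y = (\<Sum>m\<in>?A. \<sigma> (p m) * mon m) * (\<Sum>m'\<in>?B. \<sigma> (q m') * mon m')"
    using pq by (simp add: poly_eval_def mon_def)
  also have "\<dots> = (\<Sum>m\<in>?A. \<Sum>m'\<in>?B. \<sigma> (p m) * mon m * (\<sigma> (q m') * mon m'))"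
    by (rule sum_product)
  also have "\<dots> = (\<Sum>m\<in>?A. \<Sum>m'\<in>?B. ev (single (\<lambda>s. m s + m' s) (p m * q m')))"
  proof (rule sum.cong[OF refl], rule sum.cong[OF refl])
    fix m m' assume m: "m \<in> ?A" and m': "m' \<in> ?B"
    have "finite {s. m s \<noteq> 0}" "finite {s. m' s \<noteq> 0}" using pq m m' unfolding is_poly_over_def by blast+
    then have "mon (\<lambda>s. m s + m' s) = mon m * mon m'" by (rule mon_add)
    then have "ev (single (\<lambda>s. m s + m' s) (p m * q m')) = \<sigma> (p m) * \<sigma> (q m') * (mon m * mon m')"
      by (simp only: ev_single smult)
    then show "\<sigma> (p m) * mon m * (\<sigma> (q m') * mon m') = ev (single (\<lambda>s. m s + m' s) (p m * q m'))"
      by (simp only: mult_ac)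
  qed
  also have "\<dots> \<in> Pol"
  proof (rule Pol_sum[OF fA], rule Pol_sum[OF fB])
    fix m m' assume m: "m \<in> ?A" and m': "m' \<in> ?B"
    have h: "finite {s. m s \<noteq> 0}" "finite {s. m' s \<noteq> 0}" "{s. m s \<noteq> 0} \<subseteq> S" "{s. m' s \<noteq> 0} \<subseteq> S"
      using pq m m' unfolding is_poly_over_def by blast+
    have sub: "{s. m s + m' s \<noteq> 0} \<subseteq> {s. m s \<noteq> 0} \<union> {s. m' s \<noteq> 0}" by auto
    have "finite {s. m s + m' s \<noteq> 0}" using finite_subset[OF sub] h by blast
    moreover have "{s. m s + m' s \<noteq> 0} \<subseteq> S" using sub h by blast
    ultimately have "isp (single (\<lambda>s. m s + m' s) (p m * q m'))" by (rule isp_single)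
    then show "ev (single (\<lambda>s. m s + m' s) (p m * q m')) \<in> Pol" by (rule PolI)
  qed
  finally show ?thesis .
qed

lemma Pol_neg: "x \<in> Pol \<Longrightarrow> - x \<in> Pol"
  using Pol_scal[of x "-1"] by (simp add: sneg s1)

lemma fractions: "\<exists>P Q. P \<in> Pol \<and> Q \<in> Pol \<and> Q \<noteq> 0 \<and> y = P / Q"
proof -
  let ?L = "{P / Q | P Q. P \<in> Pol \<and> Q \<in> Pol \<and> Q \<noteq> 0}"
  have one: "1 \<in> Pol" using Pol_const[of 1] s1 by simp
  have inL: "x \<in> Pol \<Longrightarrow> x \<in> ?L" for x using one by (intro CollectI exI[of _ x] exI[of _ 1]) simp
  have "subfield ?L" unfolding subfield_def
  proof (intro conjI ballI)
    show "0 \<in> ?L" using inL Pol_zero by blast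
    show "1 \<in> ?L" using inL one by blast
  next
    fix x y assume "x \<in> ?L" "y \<in> ?L"
    then obtain P Q P' Q' where *: "P \<in> Pol" "Q \<in> Pol" "Q \<noteq> 0" "x = P / Q" "P' \<in> Pol" "Q' \<in> Pol" "Q' \<noteq> 0" "y = P' / Q'"
      by blast
    have "x + y = (P * Q' + P' * Q) / (Q * Q')" using * by (simp add: field_simps)
    moreover have "P * Q' + P' * Q \<in> Pol" "Q * Q' \<in> Pol" "Q * Q' \<noteq> 0" using * by (auto intro: Pol_add Pol_mult)
    ultimately show "x + y \<in> ?L" by blast
    have "x * y = (P * P') / (Q * Q')" using * by simp
    moreover have "P * P' \<in> Pol" using * by (auto intro: Pol_mult)
    ultimately show "x * y \<in> ?L" using \<open>Q * Q' \<in> Pol\<close> \<open>Q * Q' \<noteq> 0\<close> by blast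
  next
    fix x assume "x \<in> ?L"
    then obtain P Q where *: "P \<in> Pol" "Q \<in> Pol" "Q \<noteq> 0" "x = P / Q" by blast
    have "- x = (- P) / Q" using * by simp
    then show "- x \<in> ?L" using * Pol_neg by blast
    show "inverse x \<in> ?L"
    proof (cases "P = 0")
      case True
      then have "inverse x = 0" using * by simp
      then show ?thesis using inL[OF Pol_zero] by simp
    next
      case False
      then have "inverse x = Q / P" using * by simp
      then show ?thesis using * False by blast
    qed
  qed
  moreover have "range \<sigma> \<subseteq> ?L" using inL Pol_const by blast
  moreover have "S \<subseteq> ?L" using inL Pol_var by blast
  ultimately have "?L = UNIV" using gen unfolding generates_field_def by blast
  then show ?thesis by blast
qed

lemma common_denom: "finite I \<Longrightarrow> \<exists>R. R \<in> Pol \<and> R \<noteq> 0 \<and> (\<forall>i\<in>I. \<exists>P\<in>Pol. f i = P / R)"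
proof (induct I rule: finite_induct)
  case empty
  have "1 \<in> Pol" using Pol_const[of 1] s1 by simp
  then show ?case by (intro exI[of _ 1]) simp
next
  case (insert j I)
  then obtain R where R: "R \<in> Pol" "R \<noteq> 0" "\<forall>i\<in>I. \<exists>P\<in>Pol. f i = P / R" by blast
  obtain P Q where PQ: "P \<in> Pol" "Q \<in> Pol" "Q \<noteq> 0" "f j = P / Q" using fractions by blast
  have "\<forall>i\<in>insert j I. \<exists>P'\<in>Pol. f i = P' / (R * Q)"
  proof
    fix i assume "i \<in> insert j I"
    then show "\<exists>P'\<in>Pol. f i = P' / (R * Q)"
    proof
      assume "i = j"
      then have "f i = (P * R) / (R * Q)" using PQ R by simp
      moreover have "P * R \<in> Pol" using PQ R by (simp add: Pol_mult)
      ultimately show ?thesis by blast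
    next
      assume "i \<in> I"
      then obtain P' where "P' \<in> Pol" "f i = P' / R" using R by blast
      then have "f i = (P' * Q) / (R * Q)" "P' * Q \<in> Pol" using PQ R by (simp_all add: Pol_mult)
      then show ?thesis by blast
    qed
  qed
  moreover have "R * Q \<in> Pol" "R * Q \<noteq> 0" using R PQ by (simp_all add: Pol_mult)
  ultimately show ?case by blast
qed

end

definition dbl :: "('b \<Rightarrow> nat) \<Rightarrow> ('b \<Rightarrow> nat)" where "dbl \<nu> = (\<lambda>s. 2 * \<nu> s)"
definition hlf :: "('b \<Rightarrow> nat) \<Rightarrow> ('b \<Rightarrow> nat)" where "hlf \<mu> = (\<lambda>s. \<mu> s div 2)"
definition sqp :: "(('b \<Rightarrow> nat) \<Rightarrow> 'a::field) \<Rightarrow> ('b \<Rightarrow> nat) \<Rightarrow> 'a" where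
  "sqp p \<mu> = (if (\<forall>s. even (\<mu> s)) then (p (hlf \<mu>))^2 else 0)"

lemma hlf_dbl[simp]: "hlf (dbl \<nu>) = \<nu>" by (simp add: hlf_def dbl_def)
lemma dbl_hlf: "\<forall>s. even (\<mu> s) \<Longrightarrow> dbl (hlf \<mu>) = \<mu>" by (auto simp: hlf_def dbl_def fun_eq_iff)
lemma inj_dbl: "inj dbl" by (metis hlf_dbl injI)
lemma sqp_dbl[simp]: "sqp p (dbl \<nu>) = (p \<nu>)^2"
proof -
  have "\<forall>s. even (dbl \<nu> s)" by (simp add: dbl_def)
  then show ?thesis unfolding sqp_def by simp
qed
lemma dbl_even: "\<forall>s. even (dbl \<nu> s)" by (simp add: dbl_def)
lemma supp_hlf: assumes "\<forall>s. even (\<mu> s)" shows "{s. hlf \<mu> s \<noteq> 0} = {s. \<mu> s \<noteq> 0}"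
proof -
  have "(\<mu> s div 2 = 0) = (\<mu> s = 0)" for s
  proof -
    obtain k where "\<mu> s = 2 * k" using assms by (meson evenE)
    then show ?thesis by simp
  qed
  then show ?thesis by (simp add: hlf_def)
qed
lemma supp_dbl: "{s. dbl \<mu> s \<noteq> 0} = {s. \<mu> s \<noteq> 0}" by (auto simp: dbl_def)

lemma supp_sqp: "{\<mu>. sqp p \<mu> \<noteq> 0} = dbl ` {\<nu>. p \<nu> \<noteq> 0}"
proof safe
  fix \<mu> assume "sqp p \<mu> \<noteq> 0"
  then have e: "\<forall>s. even (\<mu> s)" and "p (hlf \<mu>) \<noteq> 0" by (auto simp: sqp_def split: if_splits)
  then show "\<mu> \<in> dbl ` {\<nu>. p \<nu> \<noteq> 0}" using dbl_hlf[OF e] by (metis (mono_tags, lifting) image_eqI mem_Collect_eq)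
qed simp

context ptx begin

lemma isp_sqp: assumes "isp p" shows "isp (sqp p)"
  unfolding is_poly_over_def
proof (rule conjI[OF _ allI[OF impI]])
  show "finite {\<mu>. sqp p \<mu> \<noteq> 0}" using assms by (simp add: supp_sqp is_poly_over_def)
next
  fix \<mu> assume "sqp p \<mu> \<noteq> 0"
  then obtain \<nu> where "p \<nu> \<noteq> 0" "\<mu> = dbl \<nu>" using supp_sqp by blast
  then have eq: "{s. \<mu> s \<noteq> 0} = {s. \<nu> s \<noteq> 0}" by (simp add: dbl_def)
  have "finite {s. \<nu> s \<noteq> 0} \<and> {s. \<nu> s \<noteq> 0} \<subseteq> S" using assms \<open>p \<nu> \<noteq> 0\<close>
    unfolding is_poly_over_def by blast
  then show "finite {s. \<mu> s \<noteq> 0} \<and> {s. \<mu> s \<noteq> 0} \<subseteq> S" by (simp only: eq)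
qed

lemma ev_sqp: assumes two: "(2::'b) = 0" and p: "isp p" shows "ev (sqp p) = (ev p)^2"
proof -
  let ?A = "{\<nu>. p \<nu> \<noteq> 0}"
  have fA: "finite ?A" using p by (simp add: is_poly_over_def)
  have "ev (sqp p) = (\<Sum>\<mu>\<in>dbl ` ?A. \<sigma> (sqp p \<mu>) * mon \<mu>)"
    by (rule ev_sup) (use fA supp_sqp in auto)
  also have "\<dots> = (\<Sum>\<nu>\<in>?A. \<sigma> (sqp p (dbl \<nu>)) * mon (dbl \<nu>))"
    by (rule sum.reindex[OF inj_on_subset[OF inj_dbl subset_UNIV], unfolded comp_def])
  also have "\<dots> = (\<Sum>\<nu>\<in>?A. (\<sigma> (p \<nu>) * mon \<nu>)^2)"
  proof (rule sum.cong[OF refl])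
    fix \<nu> assume "\<nu> \<in> ?A"
    then have "finite {s. \<nu> s \<noteq> 0}" using p by (simp add: is_poly_over_def)
    then have "mon (dbl \<nu>) = (mon \<nu>)^2" unfolding dbl_def by (rule mon_dbl)
    then show "\<sigma> (sqp p (dbl \<nu>)) * mon (dbl \<nu>) = (\<sigma> (p \<nu>) * mon \<nu>)^2"
      by (simp add: spow power_mult_distrib)
  qed
  also have "\<dots> = (\<Sum>\<nu>\<in>?A. \<sigma> (p \<nu>) * mon \<nu>)^2" by (rule sq_sum2[OF two, symmetric])
  also have "(\<Sum>\<nu>\<in>?A. \<sigma> (p \<nu>) * mon \<nu>) = ev p" by (rule ev_sup[OF fA, symmetric]) simp
  finally show ?thesis .
qed

lemma Pol_obtain: "x \<in> Pol \<Longrightarrow> \<exists>p. isp p \<and> x = ev p" unfolding Pol_def by blast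

lemma denom_polys: assumes "finite I"
  shows "\<exists>R p. R \<in> Pol \<and> R \<noteq> 0 \<and> (\<forall>i\<in>I. isp (p i) \<and> f i = ev (p i) / R)"
proof -
  obtain R where R: "R \<in> Pol" "R \<noteq> 0" "\<forall>i\<in>I. \<exists>P\<in>Pol. f i = P / R" using common_denom[OF assms] by blast
  have "\<forall>i. \<exists>q. i \<in> I \<longrightarrow> isp q \<and> f i = ev q / R" using R(3) Pol_obtain by metis
  then obtain p where "\<forall>i. i \<in> I \<longrightarrow> isp (p i) \<and> f i = ev (p i) / R" by metis
  then show ?thesis using R by blast
qed

lemma aniso_K: assumes two: "(2::'a) = 0" and L: "li \<phi>" shows "li (map \<sigma> \<phi>)"
  unfolding li_def
proof (rule allI, rule impI)
  fix c assume c: "(\<Sum>i<length (map \<sigma> \<phi>). (c i)^2 * map \<sigma> \<phi> ! i) = 0"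
  let ?n = "length \<phi>"
  have twob: "(2::'b) = 0" by (rule two_b[OF two])
  obtain R p where Rp: "R \<in> Pol" "R \<noteq> 0" "\<forall>i\<in>{..<?n}. isp (p i) \<and> c i = ev (p i) / R"
    using denom_polys[of "{..<?n}" c] by blast
  have ip: "\<And>i. i < ?n \<Longrightarrow> isp (p i)" using Rp by blast
  have "(\<Sum>i<?n. \<sigma> (\<phi>!i) * ev (sqp (p i))) = (\<Sum>i<?n. R^2 * ((c i)^2 * \<sigma> (\<phi>!i)))"
  proof (rule sum.cong[OF refl])
    fix i assume "i \<in> {..<?n}"
    then have "c i = ev (p i) / R" "isp (p i)" using Rp by auto
    then show "\<sigma> (\<phi>!i) * ev (sqp (p i)) = R^2 * ((c i)^2 * \<sigma> (\<phi>!i))"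
      using Rp(2) by (simp add: ev_sqp[OF twob] power_divide)
  qed
  also have "\<dots> = R^2 * (\<Sum>i<?n. (c i)^2 * map \<sigma> \<phi> ! i)" by (simp add: sum_distrib_left)
  also have "\<dots> = 0" using c by simp
  finally have z: "(\<Sum>i<?n. \<sigma> (\<phi>!i) * ev (sqp (p i))) = 0" .
  have "ev (\<lambda>\<mu>. \<Sum>i<?n. \<phi>!i * sqp (p i) \<mu>) = (\<Sum>i<?n. ev (\<lambda>\<mu>. \<phi>!i * sqp (p i) \<mu>))"
    by (rule ev_sum) (auto intro!: isp_scal isp_sqp ip)
  also have "\<dots> = (\<Sum>i<?n. \<sigma> (\<phi>!i) * ev (sqp (p i)))"
    by (rule sum.cong[OF refl]) (auto intro!: ev_scal isp_sqp ip)
  finally have "ev (\<lambda>\<mu>. \<Sum>i<?n. \<phi>!i * sqp (p i) \<mu>) = ev (\<lambda>\<mu>. 0)" using z ev_zero by simp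
  then have E: "(\<lambda>\<mu>. \<Sum>i<?n. \<phi>!i * sqp (p i) \<mu>) = (\<lambda>\<mu>. 0)"
    by (rule ev_unique[rotated 2]) (auto intro!: isp_sum isp_scal isp_sqp ip isp_zero)
  have p0: "p i \<nu> = 0" if i: "i < ?n" for i \<nu>
  proof -
    have "(\<Sum>i<?n. (p i \<nu>)^2 * \<phi>!i) = 0" using fun_cong[OF E, of "dbl \<nu>"] by (simp add: mult.commute)
    then show ?thesis using L[unfolded li_def, rule_format, of "\<lambda>i. p i \<nu>"] i by blast
  qed
  show "\<forall>i<length (map \<sigma> \<phi>). c i = 0"
  proof (intro allI impI)
    fix i assume "i < length (map \<sigma> \<phi>)"
    then have i: "i < ?n" by simp
    then have "p i = (\<lambda>\<nu>. 0)" using p0 by auto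
    then show "c i = 0" using Rp(3) i ev_zero by auto
  qed
qed

end

lemma sqp_sq: "sqp p \<mu> = (if (\<forall>s. even (\<mu> s)) then p (hlf \<mu>) else 0)^2"
  by (simp add: sqp_def)

lemma li_nz: assumes two: "(2::'a::field) = 0" and L: "li (xs::'a list)" and i: "i < length xs" shows "xs!i \<noteq> 0"
proof -
  interpret V: vector_space "fs::'a\<Rightarrow>'a\<Rightarrow>'a" using vs_fs[OF two] .
  have ind: "V.independent (set xs)" using L li_iff[OF two] by blast
  show ?thesis
  proof
    assume "xs!i = 0"
    then have "0 \<in> set xs" using i nth_mem by metis
    then show False using ind V.dependent_zero by blast
  qed
qed

context ptx begin

lemma stab_K: assumes two: "(2::'a) = 0" and L: "li \<phi>" and n: "\<phi> \<noteq> []"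
  and hc: "\<forall>i<length \<phi>. c * \<sigma> (\<phi>!i) \<in> module.span fs (set (map \<sigma> \<phi>))"
  shows "c \<in> module.span fs (\<sigma> ` stab \<phi>)"
proof -
  have twob: "(2::'b) = 0" by (rule two_b[OF two])
  interpret W: vector_space "fs::'b\<Rightarrow>'b\<Rightarrow>'b" using vs_fs[OF twob] .
  interpret V: vector_space "fs::'a\<Rightarrow>'a\<Rightarrow>'a" using vs_fs[OF two] .
  let ?n = "length \<phi>"
  have LK: "li (map \<sigma> \<phi>)" by (rule aniso_K[OF two L])
  have dK: "distinct (map \<sigma> \<phi>)" using LK li_iff[OF twob] by blast
  have "\<forall>i. \<exists>y. i < ?n \<longrightarrow> c * \<sigma> (\<phi>!i) = (\<Sum>k<?n. (y k)^2 * \<sigma> (\<phi>!k))"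
  proof
    fix i show "\<exists>y. i < ?n \<longrightarrow> c * \<sigma> (\<phi>!i) = (\<Sum>k<?n. (y k)^2 * \<sigma> (\<phi>!k))"
    proof (cases "i < ?n")
      case True
      then have "c * \<sigma> (\<phi>!i) \<in> {(\<Sum>k<length (map \<sigma> \<phi>). (y k)^2 * (map \<sigma> \<phi>)!k) | y. True}"
        using hc span_list[OF twob dK] by blast
      then show ?thesis by auto
    qed simp
  qed
  then obtain y where y: "\<And>i. i < ?n \<Longrightarrow> c * \<sigma> (\<phi>!i) = (\<Sum>k<?n. (y i k)^2 * \<sigma> (\<phi>!k))" by metis
  obtain P Q where PQ: "P \<in> Pol" "Q \<in> Pol" "Q \<noteq> 0" "c = P / Q" using fractions by blast
  obtain R g where Rg: "R \<in> Pol" "R \<noteq> 0" "\<forall>ik\<in>{..<?n} \<times> {..<?n}. isp (g ik) \<and> (\<lambda>(i,k). y i k) ik = ev (g ik) / R"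
    using denom_polys[of "{..<?n} \<times> {..<?n}" "\<lambda>(i,k). y i k"] by blast
  have yg: "y i k = ev (g (i,k)) / R" "isp (g (i,k))" if "i < ?n" "k < ?n" for i k using Rg(3) that by auto
  have "P * Q * R^2 \<in> Pol" using PQ Rg by (simp add: Pol_mult power2_eq_square)
  then obtain t where t: "isp t" "P * Q * R^2 = ev t" using Pol_obtain by blast
  have "\<forall>ik. \<exists>h. ik \<in> {..<?n} \<times> {..<?n} \<longrightarrow> isp h \<and> Q * ev (g ik) = ev h"
  proof
    fix ik show "\<exists>h. ik \<in> {..<?n} \<times> {..<?n} \<longrightarrow> isp h \<and> Q * ev (g ik) = ev h"
    proof (cases "ik \<in> {..<?n} \<times> {..<?n}")
      case True
      then have "isp (g ik)" using Rg(3) by blast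
      then have "ev (g ik) \<in> Pol" by (rule PolI)
      then have "Q * ev (g ik) \<in> Pol" using PQ(2) by (simp add: Pol_mult)
      then show ?thesis using Pol_obtain by blast
    qed simp
  qed
  then obtain h where h: "\<And>i k. i < ?n \<Longrightarrow> k < ?n \<Longrightarrow> isp (h (i,k)) \<and> Q * ev (g (i,k)) = ev (h (i,k))"
    by (metis SigmaI lessThan_iff)
  have ident: "\<sigma> (\<phi>!i) * ev t = (\<Sum>k<?n. \<sigma> (\<phi>!k) * ev (sqp (h (i,k))))" if i: "i < ?n" for i
  proof -
    have "\<sigma> (\<phi>!i) * ev t = (c * \<sigma> (\<phi>!i)) * (Q * R)^2"
      using t(2)[symmetric] PQ(3,4) by (simp add: power2_eq_square field_simps)
    also have "\<dots> = (\<Sum>k<?n. (y i k)^2 * \<sigma> (\<phi>!k) * (Q * R)^2)" using y[OF i] by (simp add: sum_distrib_right)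
    also have "\<dots> = (\<Sum>k<?n. \<sigma> (\<phi>!k) * ev (sqp (h (i,k))))"
    proof (rule sum.cong[OF refl])
      fix k assume "k \<in> {..<?n}"
      then have k: "k < ?n" by simp
      have "ev (sqp (h (i,k))) = (Q * ev (g (i,k)))^2" using h[OF i k] ev_sqp[OF twob] by metis
      also have "\<dots> = (y i k * (Q * R))^2" using yg[OF i k] Rg(2) by (simp add: field_simps)
      finally show "(y i k)^2 * \<sigma> (\<phi>!k) * (Q * R)^2 = \<sigma> (\<phi>!k) * ev (sqp (h (i,k)))"
        by (simp add: power_mult_distrib mult_ac)
    qed
    finally show ?thesis .
  qed
  have coef: "\<phi>!i * t \<mu> = (\<Sum>k<?n. \<phi>!k * sqp (h (i,k)) \<mu>)" if i: "i < ?n" for i \<mu>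
  proof -
    have ih: "\<And>k. k \<in> {..<?n} \<Longrightarrow> isp (\<lambda>\<mu>. \<phi>!k * sqp (h (i,k)) \<mu>)"
      using h[OF i] by (auto intro!: isp_scal isp_sqp)
    have "ev (\<lambda>\<mu>. \<phi>!i * t \<mu>) = \<sigma> (\<phi>!i) * ev t" by (rule ev_scal[OF t(1)])
    also have "\<dots> = (\<Sum>k<?n. \<sigma> (\<phi>!k) * ev (sqp (h (i,k))))" by (rule ident[OF i])
    also have "\<dots> = (\<Sum>k<?n. ev (\<lambda>\<mu>. \<phi>!k * sqp (h (i,k)) \<mu>))"
      by (rule sum.cong[OF refl], rule ev_scal[symmetric]) (use h[OF i] in \<open>auto intro!: isp_sqp\<close>)
    also have "\<dots> = ev (\<lambda>\<mu>. \<Sum>k<?n. \<phi>!k * sqp (h (i,k)) \<mu>)" by (rule ev_sum[symmetric]) (use ih in auto)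
    finally have "(\<lambda>\<mu>. \<phi>!i * t \<mu>) = (\<lambda>\<mu>. \<Sum>k<?n. \<phi>!k * sqp (h (i,k)) \<mu>)"
      by (rule ev_unique[rotated 2]) (use t(1) ih h[OF i] in \<open>auto intro!: isp_scal isp_sum isp_sqp\<close>)
    then show ?thesis by (rule fun_cong)
  qed
  have n0: "0 < ?n" using n by simp
  have ev_t: "\<forall>s. even (\<mu> s)" if "t \<mu> \<noteq> 0" for \<mu>
  proof (rule ccontr)
    assume nev: "\<not> (\<forall>s. even (\<mu> s))"
    have "\<phi>!0 * t \<mu> = 0" using coef[OF n0, of \<mu>] unfolding sqp_def if_not_P[OF nev] by simp
    then show False using that li_nz[OF two L n0] by simp
  qed
  have st: "t \<mu> \<in> stab \<phi>" for \<mu>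
    unfolding stab_def
  proof (rule CollectI, rule ballI)
    fix x assume "x \<in> set \<phi>"
    then obtain i where i: "i < ?n" "x = \<phi>!i" by (auto simp: in_set_conv_nth)
    have "t \<mu> * x = (\<Sum>k<?n. (if (\<forall>s. even (\<mu> s)) then h (i,k) (hlf \<mu>) else 0)^2 * \<phi>!k)"
      using coef[OF i(1), of \<mu>] i(2) by (simp add: sqp_sq mult.commute)
    then have "t \<mu> * x \<in> {(\<Sum>k<?n. (cc k)^2 * \<phi>!k) | cc. True}"
      by (intro CollectI exI[of _ "\<lambda>k. if (\<forall>s. even (\<mu> s)) then h (i,k) (hlf \<mu>) else 0"]) simp
    moreover have "distinct \<phi>" using L li_iff[OF two] by blast
    ultimately show "t \<mu> * x \<in> V.span (set \<phi>)" using span_list[OF two] by simp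
  qed
  have "ev t \<in> W.span (\<sigma> ` stab \<phi>)"
  proof -
    have ft: "finite {\<mu>. t \<mu> \<noteq> 0}" using t(1) by (simp add: is_poly_over_def)
    have "ev t = (\<Sum>\<mu>\<in>{\<mu>. t \<mu> \<noteq> 0}. \<sigma> (t \<mu>) * mon \<mu>)" by (rule ev_sup[OF ft]) simp
    also have "\<dots> \<in> W.span (\<sigma> ` stab \<phi>)"
    proof (rule W.span_sum)
      fix \<mu> assume m: "\<mu> \<in> {\<mu>. t \<mu> \<noteq> 0}"
      then have e: "\<forall>s. even (\<mu> s)" using ev_t by blast
      have "finite {s. \<mu> s \<noteq> 0}" using t(1) m unfolding is_poly_over_def by blast
      then have fh: "finite {s. hlf \<mu> s \<noteq> 0}" using supp_hlf[OF e] by simp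
      have "mon \<mu> = mon (dbl (hlf \<mu>))" using dbl_hlf[OF e] by simp
      also have "\<dots> = (mon (hlf \<mu>))^2" unfolding dbl_def by (rule mon_dbl[OF fh])
      finally have "\<sigma> (t \<mu>) * mon \<mu> = fs (mon (hlf \<mu>)) (\<sigma> (t \<mu>))" by (simp add: fs_def)
      moreover have "\<sigma> (t \<mu>) \<in> W.span (\<sigma> ` stab \<phi>)" using st by (blast intro: W.span_base)
      ultimately show "\<sigma> (t \<mu>) * mon \<mu> \<in> W.span (\<sigma> ` stab \<phi>)" using W.span_scale by metis
    qed
    finally show ?thesis .
  qed
  then have "fs (inverse (Q * R)) (ev t) \<in> W.span (\<sigma> ` stab \<phi>)" by (rule W.span_scale)
  moreover have "fs (inverse (Q * R)) (ev t) = c"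
    using t(2)[symmetric] PQ(3,4) Rg(2) by (simp add: fs_def power2_eq_square field_simps)
  ultimately show ?thesis by simp
qed

end

lemma qf_eval_cong: "(\<And>i. i < length \<phi> \<Longrightarrow> x i = y i) \<Longrightarrow> qf_eval \<phi> x = qf_eval \<phi> y"
  unfolding qf_eval_def by (rule sum.cong) auto

lemma qp_one: "1 \<in> set (quasi_pfister as)"
  by (induct as) auto

context ptx begin

lemma K_side: assumes two: "(2::'a) = 0" and L: "li \<phi>" and n: "\<phi> \<noteq> []"
  and iso: "isometric (map \<sigma> \<phi>) (qf_tensor (quasi_pfister as) \<tau>)"
  shows "\<exists>C. C \<subseteq> stab \<phi> \<and> finite C \<and> \<not> module.dependent fs C \<and> 2 ^ length as \<le> card C"
proof -
  have twob: "(2::'b) = 0" by (rule two_b[OF two])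
  interpret W: vector_space "fs::'b\<Rightarrow>'b\<Rightarrow>'b" using vs_fs[OF twob] .
  interpret V: vector_space "fs::'a\<Rightarrow>'a\<Rightarrow>'a" using vs_fs[OF two] .
  let ?\<pi> = "quasi_pfister as"
  let ?\<psi> = "qf_tensor ?\<pi> \<tau>"
  let ?K = "map \<sigma> \<phi>"
  let ?n = "length \<phi>"
  have LK: "li ?K" by (rule aniso_K[OF two L])
  have lp: "length ?\<psi> = ?n" using iso unfolding isometric_def by simp
  obtain M N where MN: "\<And>i j. i < ?n \<Longrightarrow> j < ?n \<Longrightarrow> (\<Sum>k<?n. M i k * N k j) = (if i = j then 1 else 0)"
    and NM: "\<And>i j. i < ?n \<Longrightarrow> j < ?n \<Longrightarrow> (\<Sum>k<?n. N i k * M k j) = (if i = j then 1 else 0)"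
    and Q: "\<And>x. qf_eval ?K (\<lambda>i. \<Sum>j<?n. M i j * x j) = qf_eval ?\<psi> x"
    using iso unfolding isometric_def length_map lp by blast
  have Q2: "qf_eval ?\<psi> x = (\<Sum>j<?n. (\<Sum>i<?n. (M i j)^2 * ?K!i) * (x j)^2)" for x
    using Q[of x] qf_eval_lin[OF twob, where \<phi>="?K" and m="?n" and M=M and x=x] by simp
  have psi_in: "?\<psi>!j = (\<Sum>i<?n. (M i j)^2 * ?K!i)" if j: "j < ?n" for j
  proof -
    have "qf_eval ?\<psi> (\<lambda>k. if k = j then 1 else 0) = ?\<psi>!j"
      unfolding qf_eval_def using j lp by (simp add: if_distrib[of "\<lambda>x. _ * x^2"] cong: if_cong)
    moreover have "qf_eval ?\<psi> (\<lambda>k. if k = j then 1 else 0) = (\<Sum>i<?n. (M i j)^2 * ?K!i)"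
      unfolding Q2 using j by (simp add: if_distrib[of "\<lambda>x. _ * x^2"] cong: if_cong)
    ultimately show ?thesis by simp
  qed
  have dK: "distinct ?K" using LK li_iff[OF twob] by blast
  have S1: "set ?\<psi> \<subseteq> W.span (set ?K)"
  proof
    fix x assume "x \<in> set ?\<psi>"
    then obtain j where j: "j < ?n" "x = ?\<psi>!j" using lp by (auto simp: in_set_conv_nth)
    have "x \<in> {(\<Sum>k<length ?K. (c k)^2 * ?K!k) | c. True}"
      using psi_in[OF j(1)] j(2) by (intro CollectI exI[of _ "\<lambda>i. M i j"]) simp
    then show "x \<in> W.span (set ?K)" using span_list[OF twob dK] by simp
  qed
  have S2: "set ?K \<subseteq> W.span (set ?\<psi>)"
  proof
    fix x assume "x \<in> set ?K"
    then obtain i where i: "i < ?n" "x = ?K!i" by (auto simp: in_set_conv_nth)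
    have "qf_eval ?K (\<lambda>l. \<Sum>k<?n. M l k * N k i) = qf_eval ?K (\<lambda>l. if l = i then 1 else 0)"
      by (rule qf_eval_cong) (simp add: MN i(1))
    also have "\<dots> = ?K!i" unfolding qf_eval_def using i by (simp add: if_distrib[of "\<lambda>x. _ * x^2"] cong: if_cong)
    finally have "x = qf_eval ?\<psi> (\<lambda>k. N k i)" using Q[of "\<lambda>k. N k i"] i by simp
    also have "\<dots> = (\<Sum>k<?n. fs (N k i) (?\<psi>!k))" unfolding qf_eval_def lp by (simp add: fs_def mult.commute)
    also have "\<dots> \<in> W.span (set ?\<psi>)"
      by (rule W.span_sum, rule W.span_scale, rule W.span_base) (use lp in auto)
    finally show "x \<in> W.span (set ?\<psi>)" .
  qed
  have spaneq: "W.span (set ?\<psi>) = W.span (set ?K)" using S1 S2 W.span_eq by blast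
  have Lpsi: "li ?\<psi>" unfolding li_def
  proof (rule allI, rule impI)
    fix c assume c: "(\<Sum>i<length ?\<psi>. (c i)^2 * ?\<psi>!i) = 0"
    have "qf_eval ?K (\<lambda>i. \<Sum>j<?n. M i j * c j) = 0" using c Q[of c] lp by (simp add: qf_eval_def mult.commute)
    then have "(\<Sum>i<length ?K. ((\<lambda>i. \<Sum>j<?n. M i j * c j) i)^2 * ?K!i) = 0" by (simp add: qf_eval_def mult.commute)
    then have Mc: "\<And>l. l < ?n \<Longrightarrow> (\<Sum>j<?n. M l j * c j) = 0"
      using LK[unfolded li_def, rule_format] by simp
    show "\<forall>i<length ?\<psi>. c i = 0"
    proof (intro allI impI)
      fix k assume "k < length ?\<psi>"
      then have k: "k < ?n" using lp by simp
      have "(\<Sum>j<?n. (if k = j then 1 else 0) * c j) = (\<Sum>j<?n. if k = j then c j else 0)"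
        by (rule sum.cong) auto
      then have "c k = (\<Sum>j<?n. (if k = j then 1 else 0) * c j)" using k by simp
      also have "\<dots> = (\<Sum>j<?n. (\<Sum>l<?n. N k l * M l j) * c j)" using NM k by simp
      also have "\<dots> = (\<Sum>j<?n. \<Sum>l<?n. N k l * (M l j * c j))"
        by (simp add: sum_distrib_right mult.assoc)
      also have "\<dots> = (\<Sum>l<?n. \<Sum>j<?n. N k l * (M l j * c j))" by (rule sum.swap)
      also have "\<dots> = (\<Sum>l<?n. N k l * (\<Sum>j<?n. M l j * c j))"
        by (simp add: sum_distrib_left)
      also have "\<dots> = 0" using Mc by simp
      finally show "c k = 0" .
    qed
  qed
  have dpsi: "distinct ?\<psi>" and ipsi: "W.independent (set ?\<psi>)" using Lpsi li_iff[OF twob] by auto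
  have pi_span: "set ?\<pi> \<subseteq> W.span (\<sigma> ` stab \<phi>)"
  proof
    fix p assume p: "p \<in> set ?\<pi>"
    have "p * a \<in> W.span (set ?\<psi>)" if a: "a \<in> set ?\<psi>" for a
    proof -
      obtain q t where qt: "a = q * t" "q \<in> set ?\<pi>" "t \<in> set \<tau>" using a by (auto simp: qft_set)
      have "(p * q) * t \<in> W.span ((\<lambda>c. c * t) ` set ?\<pi>)"
        by (rule span_mult_image[OF twob qp_prod[OF twob p qt(2)]])
      moreover have "W.span ((\<lambda>c. c * t) ` set ?\<pi>) \<subseteq> W.span (set ?\<psi>)"
        by (rule W.span_mono) (use qt(3) in \<open>auto simp: qft_set\<close>)
      ultimately show ?thesis using qt by (auto simp: mult.assoc)
    qed
    then have cl: "p * u \<in> W.span (set ?\<psi>)" if "u \<in> W.span (set ?\<psi>)" for u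
      using span_mult_closed[OF twob _ that] by blast
    have "\<forall>i<?n. p * \<sigma> (\<phi>!i) \<in> W.span (set ?K)"
    proof (intro allI impI)
      fix i assume "i < ?n"
      then have "\<sigma> (\<phi>!i) \<in> W.span (set ?\<psi>)" using S2 by (auto intro!: W.span_base simp: spaneq)
      then show "p * \<sigma> (\<phi>!i) \<in> W.span (set ?K)" using cl spaneq by blast
    qed
    then show "p \<in> W.span (\<sigma> ` stab \<phi>)" by (rule stab_K[OF two L n])
  qed
  have n0: "0 < ?n" using n by simp
  have tne: "\<tau> \<noteq> []" using lp n0 by (auto simp: qft_length)
  let ?t = "\<tau>!0"
  have t0in: "?t \<in> set \<tau>" using tne by simp
  have t0: "?t \<noteq> 0"
  proof
    assume "?t = 0"
    then have "0 \<in> set ?\<psi>" using t0in qp_one[of as] by (force simp: qft_set)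
    then show False using ipsi W.dependent_zero by blast
  qed
  have inj: "inj_on (\<lambda>p. p * ?t) (set ?\<pi>)" using t0 by (auto simp: inj_on_def)
  have ipi: "W.independent (set ?\<pi>)"
  proof (rule W.independent_if_scalars_zero)
    fix f x assume s: "(\<Sum>x\<in>set ?\<pi>. fs (f x) x) = 0" and x: "x \<in> set ?\<pi>"
    let ?g = "\<lambda>y. f (inv_into (set ?\<pi>) (\<lambda>p. p * ?t) y)"
    have "(\<Sum>y\<in>(\<lambda>p. p * ?t) ` set ?\<pi>. fs (?g y) y) = (\<Sum>p\<in>set ?\<pi>. fs (f p) (p * ?t))"
      by (simp add: sum.reindex[OF inj] inv_into_f_f[OF inj])
    also have "\<dots> = (\<Sum>x\<in>set ?\<pi>. fs (f x) x) * ?t" by (simp add: sum_distrib_right sum_distrib_left fs_def mult_ac)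
    also have "\<dots> = 0" using s by simp
    finally have z: "(\<Sum>y\<in>(\<lambda>p. p * ?t) ` set ?\<pi>. fs (?g y) y) = 0" .
    have sub: "(\<lambda>p. p * ?t) ` set ?\<pi> \<subseteq> set ?\<psi>" using t0in by (auto simp: qft_set)
    have "?g (x * ?t) = 0" using W.independentD[OF ipsi finite_imageI[OF finite_set] sub z] x by blast
    then show "f x = 0" using inv_into_f_f[OF inj x] by simp
  qed simp
  have cpi: "2 ^ length as \<le> card (set ?\<pi>)"
  proof -
    have "set ?\<psi> = (\<Union>t\<in>set \<tau>. (\<lambda>p. p * t) ` set ?\<pi>)" by (auto simp: qft_set)
    then have "card (set ?\<psi>) \<le> (\<Sum>t\<in>set \<tau>. card ((\<lambda>p. p * t) ` set ?\<pi>))" by (simp add: card_UN_le)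
    also have "\<dots> \<le> (\<Sum>t\<in>set \<tau>. card (set ?\<pi>))" by (rule sum_mono) (rule card_image_le, simp)
    also have "\<dots> = card (set \<tau>) * card (set ?\<pi>)" by simp
    also have "\<dots> \<le> length \<tau> * card (set ?\<pi>)" by (simp add: card_length)
    finally have "length ?\<pi> * length \<tau> \<le> length \<tau> * card (set ?\<pi>)"
      using dpsi distinct_card qft_length by metis
    then have "length ?\<pi> \<le> card (set ?\<pi>)" using tne by (simp add: mult.commute)
    then show ?thesis by (simp add: qp_length)
  qed
  obtain B where B: "B \<subseteq> \<sigma> ` stab \<phi>" "W.independent B" "\<sigma> ` stab \<phi> \<subseteq> W.span B"
    by (rule W.maximal_independent_subset)
  have "set ?\<pi> \<subseteq> W.span B" using pi_span W.span_mono[OF B(3)] W.span_span by blast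
  obtain B' where B': "B' \<subseteq> B" "finite B'" "2 ^ length as \<le> card B'"
  proof (cases "finite B")
    case True
    then have "card (set ?\<pi>) \<le> card B" using W.independent_span_bound[OF True ipi \<open>set ?\<pi> \<subseteq> W.span B\<close>] by blast
    then show ?thesis using that[of B] True cpi by simp
  next
    case False
    then obtain B' where "B' \<subseteq> B" "finite B'" "card B' = 2 ^ length as" using infinite_arbitrarily_large by blast
    then show ?thesis using that by simp
  qed
  have iB': "W.independent B'" using B(2) B'(1) W.independent_mono by blast
  define C where "C = {x \<in> stab \<phi>. \<sigma> x \<in> B'}"
  have injs: "inj \<sigma>" using sinj2 by (auto simp: inj_def)
  have sC: "\<sigma> ` C = B'" using B'(1) B(1) by (auto simp: C_def)
  have fC: "finite C" using sC B'(2) finite_imageD injs by (metis inj_on_subset subset_UNIV)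
  have cC: "card C = card B'" using sC card_image injs by (metis inj_on_subset subset_UNIV)
  have injC: "inj_on \<sigma> C" using injs by (metis inj_on_subset subset_UNIV)
  have iC: "V.independent C"
  proof (rule V.independent_if_scalars_zero[OF fC])
    fix f x assume s: "(\<Sum>x\<in>C. fs (f x) x) = 0" and x: "x \<in> C"
    let ?g = "\<lambda>y. \<sigma> (f (inv_into C \<sigma> y))"
    have "(\<Sum>y\<in>B'. fs (?g y) y) = (\<Sum>x\<in>C. fs (\<sigma> (f x)) (\<sigma> x))"
      unfolding sC[symmetric] by (simp add: sum.reindex[OF injC] inv_into_f_f[OF injC])
    also have "\<dots> = \<sigma> (\<Sum>x\<in>C. fs (f x) x)" by (simp add: ssum fs_def smult spow)
    also have "\<dots> = 0" using s s0 by simp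
    finally have z: "(\<Sum>y\<in>B'. fs (?g y) y) = 0" .
    have "\<sigma> x \<in> B'" using x sC by blast
    then have "?g (\<sigma> x) = 0" by (rule W.independentD[OF iB' B'(2) order_refl z])
    then show "f x = 0" using inv_into_f_f[OF injC x] sinj by simp
  qed
  have "C \<subseteq> stab \<phi>" by (auto simp: C_def)
  then show ?thesis using fC iC cC B'(3) by auto
qed

end

theorem lemma5p1:
  fixes \<sigma> :: "'a::field \<Rightarrow> 'b::field" and \<phi> :: "'a list" and r :: nat
  assumes "CHAR('a) = 2"
    and "anisotropic \<phi>"
    and "purely_transcendental \<sigma>"
    and "r > 0"
    and "\<exists>as :: 'b list. length as = r \<and> divisible_by (map \<sigma> \<phi>) (quasi_pfister as)"
  shows "\<exists>as :: 'a list. length as = r \<and> divisible_by \<phi> (quasi_pfister as)"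
proof -
  have two: "(2::'a) = 0" using of_nat_CHAR[where 'a='a] assms(1) by simp
  have L: "li \<phi>" using assms(2) aniso_li by blast
  show ?thesis
  proof (cases "\<phi> = []")
    case True
    have "divisible_by \<phi> (quasi_pfister (replicate r 1))"
      unfolding divisible_by_def using True
      by (intro exI[of _ "[]"]) (simp add: qft_nil isometric_def qf_eval_def)
    then show ?thesis by (intro exI[of _ "replicate r 1"]) simp
  next
    case False
    obtain S where S: "field_hom \<sigma>" "alg_indep \<sigma> S" "generates_field \<sigma> S"
      using assms(3) unfolding purely_transcendental_def by blast
    interpret P: ptx \<sigma> S using S by unfold_locales
    obtain as \<tau> where as: "length as = r" "isometric (map \<sigma> \<phi>) (qf_tensor (quasi_pfister as) \<tau>)"
      using assms(5) unfolding divisible_by_def by blast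
    obtain C where C: "C \<subseteq> stab \<phi>" "finite C" "\<not> module.dependent fs C" "2 ^ length as \<le> card C"
      using P.K_side[OF two L False as(2)] by blast
    show ?thesis using F_side[OF two L C(1-3)] C(4) as(1) by blast
  qed
qed

end
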